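(* There exist $\delta_0 > 0$ and an absolute constant $C > 0$ such that for every $0 < \delta \leqslant \delta_0$ and all $m, n \in \mathbb{N}$ with $n$ even, the number of sum-free subsets $I \subset [n]$ with $|I| = m$ and $|I \setminus O_n| \leqslant \delta m$ is at most $2^{Cn/m} \binom{n/2}{m}$.
   Context: $[n] = \{1,\ldots,n\}$. A set of integers is sum-free if it contains no $x,y,z$ (not necessarily distinct) with $x+y=z$. $O_n$ is the set of odd numbers in $[n]$. The paper writes the bound as $2^{O(n/m)}\binom{n/2}{m}$, where $O(\cdot)$ hides an absolute constant. *)

theory Defs
  imports Complex_Main
begin

definition sum_free :: "nat set \<Rightarrow> bool" where
  "sum_free A \<longleftrightarrow> (\<forall>x\<in>A. \<forall>y\<in>A. \<forall>z\<in>A. x + y \<noteq> z)"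

definition odds_upto :: "nat \<Rightarrow> nat set" where
  "odds_upto n = {x \<in> {1..n}. odd x}"

end

theory Submission
  imports Defs
begin

definition indep :: "('a \<Rightarrow> 'a \<Rightarrow> bool) \<Rightarrow> 'a set \<Rightarrow> bool" where
  "indep adj S \<longleftrightarrow> (\<forall>u\<in>S. \<forall>w\<in>S. \<not> adj u w)"

definition Zp :: "('a \<Rightarrow> 'a \<Rightarrow> bool) \<Rightarrow> real \<Rightarrow> 'a set \<Rightarrow> real" where
  "Zp adj x W = (\<Sum>S\<in>{S. S \<subseteq> W \<and> indep adj S}. x ^ card S)"

lemma Zp_empty: "Zp adj x {} = 1"
proof -
  have "{S. S \<subseteq> {} \<and> indep adj S} = {{}}" by (auto simp: indep_def)
  then show ?thesis by (simp add: Zp_def)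
qed

lemma finite_indsets: "finite W \<Longrightarrow> finite {S. S \<subseteq> W \<and> indep adj S}"
  by (rule finite_subset[of _ "Pow W"]) auto

lemma Zp_nonneg: "x \<ge> 0 \<Longrightarrow> Zp adj x W \<ge> 0"
  unfolding Zp_def by (intro sum_nonneg) auto

lemma Zp_mono:
  assumes "finite W2" "W1 \<subseteq> W2" "x \<ge> 0"
  shows "Zp adj x W1 \<le> Zp adj x W2"
  unfolding Zp_def
  by (rule sum_mono2) (use assms finite_indsets in auto)

lemma Zp_rec:
  assumes fin: "finite W" and v: "v \<in> W" and irr: "\<not> adj v v"
    and sym: "\<And>u w. adj u w \<Longrightarrow> adj w u"
  shows "Zp adj x W = Zp adj x (W - {v}) + x * Zp adj x (W - {v} - {w. adj v w})"
proof -
  let ?S = "{S. S \<subseteq> W \<and> indep adj S}"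
  let ?S1 = "{S. S \<subseteq> W - {v} \<and> indep adj S}"
  let ?T = "{T. T \<subseteq> W - {v} - {w. adj v w} \<and> indep adj T}"
  let ?S2 = "insert v ` ?T"
  have split: "?S = ?S1 \<union> ?S2"
  proof (rule set_eqI, rule iffI)
    fix S assume "S \<in> ?S"
    then have SW: "S \<subseteq> W" and iS: "indep adj S" by auto
    show "S \<in> ?S1 \<union> ?S2"
    proof (cases "v \<in> S")
      case False then show ?thesis using SW iS by auto
    next
      case True
      have "S - {v} \<in> ?T" using SW iS True by (auto simp: indep_def)
      moreover have "S = insert v (S - {v})" using True by auto
      ultimately show ?thesis by blast
    qed
  next
    fix S assume "S \<in> ?S1 \<union> ?S2"
    then show "S \<in> ?S"
    proof
      assume "S \<in> ?S1" then show ?thesis by auto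
    next
      assume "S \<in> ?S2"
      then obtain T where T: "T \<in> ?T" "S = insert v T" by auto
      have "indep adj S" using T irr sym unfolding indep_def by blast
      then show ?thesis using T v by auto
    qed
  qed
  have disj: "?S1 \<inter> ?S2 = {}" by auto
  have fin1: "finite ?S1" using fin by (intro finite_indsets) auto
  have finT: "finite ?T" using fin by (intro finite_indsets) auto
  have inj: "inj_on (insert v) ?T" unfolding inj_on_def by auto
  have "Zp adj x W = sum (\<lambda>S. x ^ card S) ?S1 + sum (\<lambda>S. x ^ card S) ?S2"
    unfolding Zp_def split by (rule sum.union_disjoint) (use fin1 finT disj in auto)
  also have "sum (\<lambda>S. x ^ card S) ?S2 = sum (\<lambda>T. x ^ card (insert v T)) ?T"
    by (rule sum.reindex[OF inj, unfolded comp_def])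
  also have "\<dots> = sum (\<lambda>T. x * x ^ card T) ?T"
  proof (rule sum.cong[OF refl])
    fix T assume "T \<in> ?T"
    then have "finite T" "v \<notin> T" using fin finite_subset by auto
    then show "x ^ card (insert v T) = x * x ^ card T" by simp
  qed
  also have "\<dots> = x * Zp adj x (W - {v} - {w. adj v w})"
    by (simp add: Zp_def sum_distrib_left)
  finally show ?thesis by (simp add: Zp_def)
qed


lemma Zp_remove_le:
  assumes fin: "finite W" and v: "v \<in> W" and irr: "\<And>v. \<not> adj v v"
    and sym: "\<And>u w. adj u w \<Longrightarrow> adj w u" and x: "x \<ge> 0"
  shows "Zp adj x W \<le> (1 + x) * Zp adj x (W - {v})"
proof -
  have "Zp adj x W = Zp adj x (W - {v}) + x * Zp adj x (W - {v} - {w. adj v w})"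
    by (rule Zp_rec[OF fin v irr sym])
  also have "Zp adj x (W - {v} - {w. adj v w}) \<le> Zp adj x (W - {v})"
    by (rule Zp_mono) (use fin x in auto)
  then have "x * Zp adj x (W - {v} - {w. adj v w}) \<le> x * Zp adj x (W - {v})"
    using x by (rule mult_left_mono)
  finally show ?thesis by (simp add: algebra_simps)
qed

lemma Zp_removeset_le:
  assumes fin: "finite W" and Y: "Y \<subseteq> W" and irr: "\<And>v. \<not> adj v v"
    and sym: "\<And>u w. adj u w \<Longrightarrow> adj w u" and x: "x \<ge> 0"
  shows "Zp adj x W \<le> (1 + x) ^ card Y * Zp adj x (W - Y)"
proof -
  have "finite Y" using fin Y finite_subset by auto
  then show ?thesis using Y
  proof (induction Y rule: finite_induct)
    case empty then show ?case by simp
  next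
    case (insert y Y)
    then have IH: "Zp adj x W \<le> (1 + x) ^ card Y * Zp adj x (W - Y)" by auto
    have "Zp adj x (W - Y) \<le> (1 + x) * Zp adj x (W - Y - {y})"
      by (rule Zp_remove_le) (use insert fin irr sym x in auto)
    then have "(1 + x) ^ card Y * Zp adj x (W - Y) \<le> (1 + x) ^ card Y * ((1 + x) * Zp adj x (W - Y - {y}))"
      using x by (intro mult_left_mono) auto
    moreover have "W - Y - {y} = W - insert y Y" by auto
    ultimately show ?case using IH insert by (simp add: algebra_simps)
  qed
qed

lemma Zp_L1:
  assumes fin: "finite W" and u: "u \<in> W" and irr: "\<And>v. \<not> adj v v"
    and sym: "\<And>u w. adj u w \<Longrightarrow> adj w u" and x: "x > 0"
    and deg: "card {w\<in>W. adj u w} \<le> D"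
  shows "Zp adj x (W - {u}) \<le> (1 - x / (1 + x) ^ (D + 1)) * Zp adj x W"
proof -
  let ?R = "W - {u} - {w. adj u w}"
  have rec: "Zp adj x W = Zp adj x (W - {u}) + x * Zp adj x ?R"
    by (rule Zp_rec[OF fin u irr sym])
  have Ysub: "{w\<in>W - {u}. adj u w} \<subseteq> W - {u}" by auto
  have "Zp adj x (W - {u}) \<le> (1 + x) ^ card {w\<in>W - {u}. adj u w} * Zp adj x (W - {u} - {w\<in>W - {u}. adj u w})"
    by (rule Zp_removeset_le) (use fin Ysub irr sym x in auto)
  also have "W - {u} - {w\<in>W - {u}. adj u w} = ?R" by auto
  also have "card {w\<in>W - {u}. adj u w} \<le> D"
    using deg by (rule order_trans[rotated]) (intro card_mono, use fin in auto)
  then have "(1 + x) ^ card {w\<in>W - {u}. adj u w} \<le> (1 + x) ^ D"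
    using x by (intro power_increasing) auto
  then have "(1 + x) ^ card {w\<in>W - {u}. adj u w} * Zp adj x ?R \<le> (1 + x) ^ D * Zp adj x ?R"
    using Zp_nonneg[of x adj ?R] x by (intro mult_right_mono) auto
  finally have A: "Zp adj x (W - {u}) \<le> (1 + x) ^ D * Zp adj x ?R" .
  have "1 \<le> (1 + x) ^ D" using x by (intro one_le_power) auto
  then have "x \<le> x * (1 + x) ^ D" using x by simp
  then have "Zp adj x W \<le> ((1 + x) ^ D + x * (1 + x) ^ D) * Zp adj x ?R"
    using rec A Zp_nonneg[of x adj ?R] x
    by (smt (verit, ccfv_SIG) mult_right_mono distrib_right)
  also have "(1 + x) ^ D + x * (1 + x) ^ D = (1 + x) ^ (D + 1)" by (simp add: algebra_simps)
  finally have B: "Zp adj x W \<le> (1 + x) ^ (D + 1) * Zp adj x ?R" .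
  have pos: "(1 + x) ^ (D + 1) > 0" using x by simp
  have "x / (1 + x) ^ (D + 1) * Zp adj x W \<le> x / (1 + x) ^ (D + 1) * ((1 + x) ^ (D + 1) * Zp adj x ?R)"
    by (rule mult_left_mono[OF B]) (use x pos in simp)
  also have "\<dots> = x * Zp adj x ?R" using pos x by simp
  finally have "x / (1 + x) ^ (D + 1) * Zp adj x W \<le> x * Zp adj x ?R" .
  then show ?thesis using rec by (simp add: algebra_simps)
qed

lemma Zp_L2:
  assumes fin: "finite W" and X: "X \<subseteq> W" and irr: "\<And>v. \<not> adj v v"
    and sym: "\<And>u w. adj u w \<Longrightarrow> adj w u" and x: "x > 0"
    and deg: "\<And>u. u \<in> W \<Longrightarrow> card {w\<in>W. adj u w} \<le> D"
  shows "Zp adj x (W - X) \<le> (1 - x / (1 + x) ^ (D + 1)) ^ card X * Zp adj x W"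
proof -
  let ?p = "x / (1 + x) ^ (D + 1)"
  have "?p \<le> x / (1 + x)"
    using x by (intro divide_left_mono) (auto intro!: power_increasing[where N="D+1" and n=1, simplified])
  also have "\<dots> \<le> 1" using x by simp
  finally have p1: "1 - ?p \<ge> 0" by simp
  have "finite X" using fin X finite_subset by auto
  then show ?thesis using X
  proof (induction X rule: finite_induct)
    case empty then show ?case by simp
  next
    case (insert y X)
    then have IH: "Zp adj x (W - X) \<le> (1 - ?p) ^ card X * Zp adj x W" by auto
    have "card {w\<in>W - X. adj y w} \<le> card {w\<in>W. adj y w}"
      by (intro card_mono) (use fin in auto)
    also have "\<dots> \<le> D" using deg[of y] insert by auto
    finally have "card {w\<in>W - X. adj y w} \<le> D" .
    then have "Zp adj x (W - X - {y}) \<le> (1 - ?p) * Zp adj x (W - X)"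
      by (intro Zp_L1) (use insert fin irr sym x in auto)
    also have "\<dots> \<le> (1 - ?p) * ((1 - ?p) ^ card X * Zp adj x W)"
      using IH p1 by (rule mult_left_mono)
    finally have "Zp adj x (W - X - {y}) \<le> (1 - ?p) ^ card (insert y X) * Zp adj x W"
      using insert by (simp add: algebra_simps)
    moreover have "W - X - {y} = W - insert y X" by auto
    ultimately show ?case by simp
  qed
qed

lemma pow_bound_aux:
  fixes p :: real
  assumes "0 \<le> p" "p \<le> 1" "real d * p \<le> 1"
  shows "(1 - p) ^ d \<le> 1 - real d * p / 2"
proof -
  have "(1 - p) * (1 + p) \<le> 1" by (simp add: algebra_simps)
  then have "((1 - p) * (1 + p)) ^ d \<le> 1 ^ d"
    using assms by (intro power_mono) auto
  then have A: "(1 - p) ^ d * (1 + p) ^ d \<le> 1" by (simp add: power_mult_distrib)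
  have B: "1 + real d * p \<le> (1 + p) ^ d"
    using Bernoulli_inequality[of p d] assms by simp
  have c0: "(1 - p) ^ d \<ge> 0" using assms by simp
  have "(1 - p) ^ d * (1 + real d * p) \<le> (1 - p) ^ d * (1 + p) ^ d"
    using B c0 by (rule mult_left_mono)
  then have C: "(1 - p) ^ d * (1 + real d * p) \<le> 1" using A by linarith
  have t0: "real d * p \<ge> 0" using assms by simp
  have "(1 - real d * p / 2) * (1 + real d * p) = 1 + real d * p / 2 * (1 - real d * p)"
    by (simp add: field_simps)
  also have "\<dots> \<ge> 1" using t0 assms(3) by simp
  finally have D: "(1 - real d * p / 2) * (1 + real d * p) \<ge> 1" .
  have "1 + real d * p > 0" using t0 by simp
  then show ?thesis using C D
    by (metis (no_types, opaque_lifting) mult_le_cancel_right_pos order_trans)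
qed

definition Pd :: "('a \<Rightarrow> 'a \<Rightarrow> bool) \<Rightarrow> 'a set \<Rightarrow> nat" where
  "Pd adj W = (\<Sum>u\<in>W. card {w\<in>W. adj u w})"

lemma Pd_insert:
  assumes fin: "finite F" and v: "v \<notin> F" and irr: "\<And>v. \<not> adj v v"
    and sym: "\<And>u w. adj u w \<Longrightarrow> adj w u"
  shows "Pd adj (insert v F) = Pd adj F + 2 * card {w\<in>F. adj v w}"
proof -
  have A: "card {w\<in>insert v F. adj v w} = card {w\<in>F. adj v w}"
    using irr by (metis (no_types, lifting) insert_iff mem_Collect_eq)
  have B: "card {w\<in>insert v F. adj u w} = card {w\<in>F. adj u w} + (if adj u v then 1 else 0)"
    if "u \<in> F" for u
  proof (cases "adj u v")
    case True
    then have "{w\<in>insert v F. adj u w} = insert v {w\<in>F. adj u w}" by auto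
    then show ?thesis using True fin v by simp
  next
    case False
    then have "{w\<in>insert v F. adj u w} = {w\<in>F. adj u w}" by auto
    then show ?thesis using False by simp
  qed
  have C: "(\<Sum>u\<in>F. (if adj u v then 1 else 0::nat)) = card {w\<in>F. adj v w}"
  proof -
    have "(\<Sum>u\<in>F. (if adj u v then 1 else 0::nat)) = card {u\<in>F. adj u v}"
      using fin by (simp add: sum.If_cases Int_def)
    also have "{u\<in>F. adj u v} = {w\<in>F. adj v w}" using sym by blast
    finally show ?thesis .
  qed
  have "Pd adj (insert v F) = card {w\<in>insert v F. adj v w} + (\<Sum>u\<in>F. card {w\<in>insert v F. adj u w})"
    unfolding Pd_def using fin v by simp
  also have "(\<Sum>u\<in>F. card {w\<in>insert v F. adj u w}) = (\<Sum>u\<in>F. card {w\<in>F. adj u w} + (if adj u v then 1 else 0))"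
    by (rule sum.cong) (use B in auto)
  also have "\<dots> = Pd adj F + card {w\<in>F. adj v w}"
    unfolding sum.distrib Pd_def C ..
  finally show ?thesis using A by simp
qed

lemma Zp_main:
  assumes fin: "finite W" and irr: "\<And>v. \<not> adj v v"
    and sym: "\<And>u w. adj u w \<Longrightarrow> adj w u" and x: "x > 0"
    and deg: "\<And>u. u \<in> W \<Longrightarrow> card {w\<in>W. adj u w} \<le> D"
    and Dp: "real D * (x / (1 + x) ^ (D + 1)) \<le> 1"
  shows "Zp adj x W \<le> (1 + x) ^ card W * exp (- (x\<^sup>2 / (4 * (1 + x) ^ (D + 2))) * real (Pd adj W))"
  using fin deg
proof (induction W rule: finite_induct)
  case empty then show ?case by (simp add: Zp_empty Pd_def)
next
  case (insert v F)
  let ?p = "x / (1 + x) ^ (D + 1)"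
  let ?\<beta> = "x\<^sup>2 / (4 * (1 + x) ^ (D + 2))"
  define d where "d = card {w\<in>F. adj v w}"
  have degF: "card {w\<in>F. adj u w} \<le> D" if "u \<in> F" for u
  proof -
    have "card {w\<in>F. adj u w} \<le> card {w\<in>insert v F. adj u w}"
      by (intro card_mono) (use insert in auto)
    then show ?thesis using insert.prems[of u] that by auto
  qed
  have IH: "Zp adj x F \<le> (1 + x) ^ card F * exp (- ?\<beta> * real (Pd adj F))"
    using insert.IH degF by auto
  have dD: "d \<le> D"
  proof -
    have "d \<le> card {w\<in>insert v F. adj v w}" unfolding d_def
      by (intro card_mono) (use insert in auto)
    then show ?thesis using insert.prems[of v] by auto
  qed
  have p0: "?p \<ge> 0" using x by simp
  have "?p \<le> x / (1 + x)"
    using x by (intro divide_left_mono) (auto intro!: power_increasing[where N="D+1" and n=1, simplified])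
  also have "\<dots> \<le> 1" using x by simp
  finally have p1: "?p \<le> 1" .
  have dp: "real d * ?p \<le> 1"
    using Dp dD p0 by (smt (verit) mult_right_mono of_nat_mono)
  have rec: "Zp adj x (insert v F) = Zp adj x F + x * Zp adj x (F - {w. adj v w})"
    using Zp_rec[of "insert v F" v adj x] insert irr sym by simp
  have "Zp adj x (F - {w. adj v w}) = Zp adj x (F - {w\<in>F. adj v w})"
    by (rule arg_cong[where f="Zp adj x"]) auto
  also have "\<dots> \<le> (1 - ?p) ^ d * Zp adj x F"
    unfolding d_def by (rule Zp_L2) (use insert irr sym x degF in auto)
  also have "\<dots> \<le> (1 - real d * ?p / 2) * Zp adj x F"
    using pow_bound_aux[OF p0 p1 dp] Zp_nonneg[of x adj F] x by (intro mult_right_mono) auto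
  finally have "Zp adj x (insert v F) \<le> Zp adj x F + x * ((1 - real d * ?p / 2) * Zp adj x F)"
    using rec x by (smt (verit) mult_left_mono)
  also have "\<dots> = (1 + x) * (1 - x * real d * ?p / (2 * (1 + x))) * Zp adj x F"
  proof -
    have gen: "Z + x * ((1 - dd * q / 2) * Z) = (1 + x) * (1 - x * dd * q / (2 * (1 + x))) * Z"
      for Z dd q :: real using x by (simp add: field_simps)
    show ?thesis by (rule gen)
  qed
  also have "(1 - x * real d * ?p / (2 * (1 + x))) \<le> exp (- (x * real d * ?p / (2 * (1 + x))))"
    by (rule exp_ge_add_one_self[of "- _", simplified])
  also have "x * real d * ?p / (2 * (1 + x)) = ?\<beta> * (2 * real d)"
  proof -
    have gen0: "x * dd * (x / (y * c)) / (2 * y) = x\<^sup>2 / (4 * (y\<^sup>2 * c)) * (2 * dd)"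
      if "c \<noteq> 0" "y \<noteq> 0" for dd c y :: real
      using that by (simp add: field_simps power2_eq_square)
    have gen: "x * dd * (x / ((1 + x) * c)) / (2 * (1 + x)) = x\<^sup>2 / (4 * ((1 + x)\<^sup>2 * c)) * (2 * dd)"
      if "c > 0" for dd c :: real
      by (rule gen0) (use x that in auto)
    have e1: "(1 + x) ^ (D + 1) = (1 + x) * (1 + x) ^ D" by simp
    have e2: "(1 + x) ^ (D + 2) = (1 + x)\<^sup>2 * (1 + x) ^ D" by (simp add: power_add power2_eq_square mult.commute)
    show ?thesis unfolding e1 e2 by (rule gen) (use x in simp)
  qed
  finally have S: "Zp adj x (insert v F) \<le> (1 + x) * exp (- (?\<beta> * (2 * real d))) * Zp adj x F"
    using x Zp_nonneg[of x adj F] by (simp add: mult_left_mono mult_right_mono)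
  also have "\<dots> \<le> (1 + x) * exp (- (?\<beta> * (2 * real d))) * ((1 + x) ^ card F * exp (- ?\<beta> * real (Pd adj F)))"
    using IH x by (intro mult_left_mono) auto
  also have "\<dots> = (1 + x) ^ card (insert v F) * exp (- ?\<beta> * real (Pd adj (insert v F)))"
  proof -
    have gen: "(1 + x) * exp (- (B * (2 * dd))) * ((1 + x) ^ c * exp (- B * P))
      = (1 + x) ^ Suc c * exp (- B * (P + 2 * dd))" for B dd P :: real and c :: nat
      by (simp add: algebra_simps exp_add[symmetric])
    have A: "real (Pd adj (insert v F)) = real (Pd adj F) + 2 * real d"
      using insert Pd_insert[of F v adj] irr sym by (simp add: d_def)
    have B: "card (insert v F) = Suc (card F)" using insert by simp
    show ?thesis unfolding A B by (rule gen)
  qed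
  finally show ?case .
qed

lemma count_indep_le:
  assumes fin: "finite V" and x: "x > 0"
  shows "real (card {S. S \<subseteq> V \<and> indep adj S \<and> card S = a}) * x ^ a \<le> Zp adj x V"
proof -
  have "real (card {S. S \<subseteq> V \<and> indep adj S \<and> card S = a}) * x ^ a
      = (\<Sum>S\<in>{S. S \<subseteq> V \<and> indep adj S \<and> card S = a}. x ^ card S)" by simp
  also have "\<dots> \<le> Zp adj x V" unfolding Zp_def
    by (rule sum_mono2) (use finite_indsets[OF fin] x in auto)
  finally show ?thesis .
qed

lemma indep_Pd_le:
  assumes fin: "finite V" and S: "S \<subseteq> V" and ind: "indep adj S"
    and sym: "\<And>u w. adj u w \<Longrightarrow> adj w u"
    and deg: "\<And>u. u \<in> V \<Longrightarrow> card {w\<in>V. adj u w} \<le> D"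
  shows "Pd adj V \<le> 2 * D * card (V - S)"
proof -
  have finS: "finite S" using fin S finite_subset by auto
  have V: "V = (V - S) \<union> S" using S by auto
  have "Pd adj V = (\<Sum>u\<in>V - S. card {w\<in>V. adj u w}) + (\<Sum>u\<in>S. card {w\<in>V. adj u w})"
    unfolding Pd_def by (subst V, rule sum.union_disjoint) (use fin finS in auto)
  also have "(\<Sum>u\<in>V - S. card {w\<in>V. adj u w}) \<le> (\<Sum>u\<in>V - S. D)"
    by (rule sum_mono) (use deg in auto)
  also have "(\<Sum>u\<in>S. card {w\<in>V. adj u w}) = (\<Sum>u\<in>S. \<Sum>w\<in>V - S. if adj u w then 1 else 0)"
  proof (rule sum.cong[OF refl])
    fix u assume u: "u \<in> S"
    have "{w\<in>V. adj u w} = {w\<in>V - S. adj u w}" using ind u unfolding indep_def by auto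
    then show "card {w\<in>V. adj u w} = (\<Sum>w\<in>V - S. if adj u w then 1 else 0)"
      using fin by (simp add: sum.If_cases Int_def)
  qed
  also have "\<dots> = (\<Sum>w\<in>V - S. \<Sum>u\<in>S. if adj u w then 1 else 0)" by (rule sum.swap)
  also have "\<dots> \<le> (\<Sum>w\<in>V - S. D)"
  proof (rule sum_mono)
    fix w assume w: "w \<in> V - S"
    have "(\<Sum>u\<in>S. if adj u w then 1 else 0) = card {u\<in>S. adj u w}"
      using finS by (simp add: sum.If_cases Int_def)
    also have "\<dots> \<le> card {u\<in>V. adj w u}"
      by (rule card_mono) (use fin S sym in auto)
    also have "\<dots> \<le> D" using deg w by auto
    finally show "(\<Sum>u\<in>S. if adj u w then 1 else 0) \<le> D" .
  qed
  finally show ?thesis by (simp add: algebra_simps)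
qed

definition adjE :: "nat set \<Rightarrow> nat \<Rightarrow> nat \<Rightarrow> bool" where
  "adjE E x y \<longleftrightarrow> x \<noteq> y \<and> (\<exists>e\<in>E. y = x + e \<or> x = y + e \<or> x + y = e)"

lemma adjE_sym: "adjE E u w \<Longrightarrow> adjE E w u"
  unfolding adjE_def by (auto simp: add.commute)

lemma adjE_irr: "\<not> adjE E v v"
  unfolding adjE_def by auto

lemma adjE_mono: "E' \<subseteq> E \<Longrightarrow> adjE E' u w \<Longrightarrow> adjE E u w"
  unfolding adjE_def by auto

lemma sum_free_indep:
  assumes "sum_free I" "A \<subseteq> I" "E \<subseteq> I"
  shows "indep (adjE E) A"
  using assms unfolding indep_def adjE_def sum_free_def by blast

definition evens_upto :: "nat \<Rightarrow> nat set" where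
  "evens_upto n = {x \<in> {1..n}. even x}"

lemma odds_eq: "odds_upto n = (\<lambda>i. 2 * i + 1) ` {..<(n + 1) div 2}"
proof (rule set_eqI, rule iffI)
  fix x assume "x \<in> odds_upto n"
  then have x: "odd x" "1 \<le> x" "x \<le> n" by (auto simp: odds_upto_def)
  then obtain i where "x = 2 * i + 1" by (metis oddE)
  then show "x \<in> (\<lambda>i. 2 * i + 1) ` {..<(n + 1) div 2}" using x by auto
next
  fix x assume "x \<in> (\<lambda>i. 2 * i + 1) ` {..<(n + 1) div 2}"
  then show "x \<in> odds_upto n" by (auto simp: odds_upto_def)
qed

lemma card_odds: "even n \<Longrightarrow> card (odds_upto n) = n div 2"
proof -
  assume "even n"
  have "card (odds_upto n) = card {..<(n + 1) div 2}"
    unfolding odds_eq by (rule card_image) (auto simp: inj_on_def)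
  then show ?thesis using \<open>even n\<close> by auto
qed

lemma finite_odds: "finite (odds_upto n)" by (simp add: odds_upto_def)

lemma evens_eq: "evens_upto n = (\<lambda>i. 2 * i + 2) ` {..<n div 2}"
proof (rule set_eqI, rule iffI)
  fix x assume "x \<in> evens_upto n"
  then have x: "even x" "1 \<le> x" "x \<le> n" by (auto simp: evens_upto_def)
  then obtain j where j: "x = 2 * j" by (metis evenE)
  then have "j \<ge> 1" using x by auto
  then have "x = 2 * (j - 1) + 2" using j by auto
  then obtain i where "x = 2 * i + 2" by blast
  then show "x \<in> (\<lambda>i. 2 * i + 2) ` {..<n div 2}" using x by auto
next
  fix x assume "x \<in> (\<lambda>i. 2 * i + 2) ` {..<n div 2}"
  then show "x \<in> evens_upto n" by (auto simp: evens_upto_def)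
qed

lemma card_evens: "card (evens_upto n) = n div 2"
proof -
  have "card (evens_upto n) = card {..<n div 2}"
    unfolding evens_eq by (rule card_image) (auto simp: inj_on_def)
  then show ?thesis by auto
qed

lemma finite_evens: "finite (evens_upto n)" by (simp add: evens_upto_def)

lemma deg_upper:
  assumes "finite E"
  shows "card {y\<in>V. adjE E x y} \<le> 3 * card E"
proof -
  have "{y\<in>V. adjE E x y} \<subseteq> (\<lambda>e. x + e) ` E \<union> (\<lambda>e. x - e) ` E \<union> (\<lambda>e. e - x) ` E"
    unfolding adjE_def by force
  then have "card {y\<in>V. adjE E x y} \<le> card ((\<lambda>e. x + e) ` E \<union> (\<lambda>e. x - e) ` E \<union> (\<lambda>e. e - x) ` E)"
    by (intro card_mono) (use assms in auto)
  also have "\<dots> \<le> card ((\<lambda>e. x + e) ` E) + card ((\<lambda>e. x - e) ` E) + card ((\<lambda>e. e - x) ` E)"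
    by (metis (no_types, lifting) card_Un_le add_le_mono order_trans le_refl)
  also have "\<dots> \<le> card E + card E + card E"
    by (intro add_mono card_image_le assms)
  finally show ?thesis by simp
qed


lemma deg_lower:
  assumes x: "x \<in> odds_upto n" and E: "E \<subseteq> evens_upto n"
  shows "card E \<le> 2 * card {y\<in>odds_upto n. adjE E x y} + (if 2 * x \<in> E then 1 else 0)"
proof -
  let ?Nb = "{y\<in>odds_upto n. adjE E x y}"
  define E1 where "E1 = {e\<in>E. x < e \<and> e \<noteq> 2 * x}"
  define E2 where "E2 = {e\<in>E. e < x}"
  define E3 where "E3 = {e\<in>E. e = 2 * x}"
  have finE: "finite E" using E finite_evens finite_subset by blast
  have xo: "odd x" "1 \<le> x" "x \<le> n" using x by (auto simp: odds_upto_def)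
  have Eev: "\<And>e. e \<in> E \<Longrightarrow> even e \<and> 1 \<le> e \<and> e \<le> n" using E by (auto simp: evens_upto_def)
  have Eu: "E = E1 \<union> E2 \<union> E3"
  proof -
    have "e \<noteq> x" if "e \<in> E" for e using Eev[OF that] xo by auto
    then show ?thesis unfolding E1_def E2_def E3_def
      by (auto simp: nat_neq_iff)
  qed
  have "card E \<le> card E1 + card E2 + card E3"
  proof -
    have a: "card (E1 \<union> E2 \<union> E3) \<le> card (E1 \<union> E2) + card E3" by (rule card_Un_le)
    have b: "card (E1 \<union> E2) \<le> card E1 + card E2" by (rule card_Un_le)
    show ?thesis using a b Eu by simp
  qed
  moreover have "card E3 \<le> (if 2 * x \<in> E then 1 else 0)"
  proof (cases "2 * x \<in> E")
    case True then have "E3 = {2 * x}" unfolding E3_def by auto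
    then show ?thesis using True by simp
  next
    case False then have "E3 = {}" unfolding E3_def by auto
    then show ?thesis by simp
  qed
  moreover have "card E1 \<le> card ?Nb"
  proof -
    have "inj_on (\<lambda>e. e - x) E1" unfolding E1_def inj_on_def by auto
    moreover have "(\<lambda>e. e - x) ` E1 \<subseteq> ?Nb"
    proof
      fix y assume "y \<in> (\<lambda>e. e - x) ` E1"
      then obtain e where e: "e \<in> E1" "y = e - x" by auto
      then have ee: "e \<in> E" "x < e" "e \<noteq> 2 * x" "even e" "e \<le> n" using Eev unfolding E1_def by auto
      have "odd y" using ee e xo by auto
      moreover have "1 \<le> y" "y \<le> n" using ee e by auto
      moreover have "adjE E x y"
      proof -
        have "x + y = e" "x \<noteq> y" using ee e by auto
        then show ?thesis unfolding adjE_def using ee by blast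
      qed
      ultimately show "y \<in> ?Nb" by (auto simp: odds_upto_def)
    qed
    ultimately show ?thesis
      using card_image[of "\<lambda>e. e - x" E1] card_mono[of ?Nb "(\<lambda>e. e - x) ` E1"] finite_odds by auto
  qed
  moreover have "card E2 \<le> card ?Nb"
  proof -
    have "inj_on (\<lambda>e. x - e) E2" unfolding E2_def inj_on_def by auto
    moreover have "(\<lambda>e. x - e) ` E2 \<subseteq> ?Nb"
    proof
      fix y assume "y \<in> (\<lambda>e. x - e) ` E2"
      then obtain e where e: "e \<in> E2" "y = x - e" by auto
      then have ee: "e \<in> E" "e < x" "even e" "1 \<le> e" using Eev unfolding E2_def by auto
      have "odd y" using ee e xo by auto
      moreover have "1 \<le> y" "y \<le> n" using ee e xo by auto
      moreover have "adjE E x y"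
      proof -
        have "x = y + e" "x \<noteq> y" using ee e by auto
        then show ?thesis unfolding adjE_def using ee by blast
      qed
      ultimately show "y \<in> ?Nb" by (auto simp: odds_upto_def)
    qed
    ultimately show ?thesis
      using card_image[of "\<lambda>e. x - e" E2] card_mono[of ?Nb "(\<lambda>e. x - e) ` E2"] finite_odds by auto
  qed
  ultimately show ?thesis by linarith
qed

lemma Pd_lower:
  assumes n: "even n" and E: "E \<subseteq> evens_upto n"
  shows "(n div 2) * card E \<le> 2 * Pd (adjE E) (odds_upto n) + card E"
proof -
  have "(n div 2) * card E = (\<Sum>x\<in>odds_upto n. card E)" using card_odds[OF n] by simp
  also have "\<dots> \<le> (\<Sum>x\<in>odds_upto n. 2 * card {y\<in>odds_upto n. adjE E x y} + (if 2 * x \<in> E then 1 else 0))"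
    by (rule sum_mono) (rule deg_lower[OF _ E])
  also have "\<dots> = 2 * Pd (adjE E) (odds_upto n) + card {x\<in>odds_upto n. 2 * x \<in> E}"
    by (simp add: sum.distrib Pd_def sum_distrib_left sum.If_cases finite_odds Int_def)
  also have "card {x\<in>odds_upto n. 2 * x \<in> E} \<le> card E"
  proof -
    have "inj_on (\<lambda>x. 2 * x) {x\<in>odds_upto n. 2 * x \<in> E}" by (auto simp: inj_on_def)
    moreover have "(\<lambda>x. 2 * x) ` {x\<in>odds_upto n. 2 * x \<in> E} \<subseteq> E" by auto
    moreover have "finite E" using E finite_evens finite_subset by blast
    ultimately show ?thesis by (metis card_image card_mono)
  qed
  finally show ?thesis by simp
qed

lemma binom_step:
  assumes "j < N"
  shows "real (N choose Suc j) * real (Suc j) = real (N choose j) * real (N - j)"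
proof -
  have N: "N = Suc (N - 1)" using assms by simp
  have a: "Suc j * (N choose Suc j) = N * ((N - 1) choose j)"
    using Suc_times_binomial[of j "N - 1"] N by simp
  have b: "(N - j) * (N choose j) = N * ((N - 1) choose j)" by (rule binomial_absorb_comp)
  have "(N choose Suc j) * Suc j = (N choose j) * (N - j)" using a b by (simp add: mult.commute)
  then show ?thesis by (metis of_nat_mult)
qed

lemma mode_lemma:
  fixes N m :: nat
  assumes m: "0 < m" "m < N"
  defines "x \<equiv> real m / real (N - m)"
  shows "(1 + x) ^ N \<le> real (N + 1) * real (N choose m) * x ^ m"
proof -
  define t where "t j = real (N choose j) * x ^ j" for j
  have x0: "x > 0" unfolding x_def using m by simp
  have Nm: "real (N - m) > 0" using m by simp
  have step: "t (Suc j) * real (Suc j) = t j * (x * real (N - j))" if "j < N" for j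
    unfolding t_def using binom_step[OF that] by (simp add: algebra_simps)
  have up: "t j \<le> t (Suc j)" if "j < m" for j
  proof -
    have jN: "j < N" using that m by simp
    have "real (Suc j) * real (N - m) \<le> real m * real (N - m)"
      using that Nm by (intro mult_right_mono) auto
    also have "\<dots> \<le> real m * real (N - j)" using that m by (intro mult_left_mono) auto
    finally have "real (Suc j) \<le> x * real (N - j)"
      unfolding x_def using Nm by (simp add: field_simps)
    moreover have "t j \<ge> 0" using x0 unfolding t_def by simp
    ultimately have "t j * real (Suc j) \<le> t j * (x * real (N - j))"
      by (rule mult_left_mono)
    also have "t j * (x * real (N - j)) = t (Suc j) * real (Suc j)" using step[OF jN] by (rule sym)
    finally show ?thesis by simp
  qed
  have down: "t (Suc j) \<le> t j" if "m \<le> j" "j < N" for j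
  proof -
    have "real m * real (N - j) \<le> real m * real (N - m)" using that by (intro mult_left_mono) auto
    also have "\<dots> \<le> real (Suc j) * real (N - m)" using that Nm by (intro mult_right_mono) auto
    finally have "x * real (N - j) \<le> real (Suc j)"
      unfolding x_def using Nm by (simp add: field_simps)
    moreover have "t j \<ge> 0" using x0 unfolding t_def by simp
    ultimately have "t j * (x * real (N - j)) \<le> t j * real (Suc j)"
      by (rule mult_left_mono)
    then have "t (Suc j) * real (Suc j) \<le> t j * real (Suc j)" unfolding step[OF that(2)] .
    then show ?thesis by simp
  qed
  have P1: "t (m - i) \<le> t m" if "i \<le> m" for i
    using that
  proof (induction i)
    case 0 then show ?case by simp
  next
    case (Suc i)
    have "t (m - Suc i) \<le> t (Suc (m - Suc i))" by (rule up) (use Suc in auto)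
    also have "Suc (m - Suc i) = m - i" using Suc by simp
    finally show ?case using Suc by simp
  qed
  have P2: "t (m + i) \<le> t m" if "m + i \<le> N" for i
    using that
  proof (induction i)
    case 0 then show ?case by simp
  next
    case (Suc i)
    have "t (m + Suc i) \<le> t (m + i)" using down[of "m + i"] Suc by simp
    then show ?case using Suc by simp
  qed
  have all: "t j \<le> t m" if "j \<le> N" for j
  proof (cases "j \<le> m")
    case True then show ?thesis using P1[of "m - j"] by simp
  next
    case False then show ?thesis using P2[of "j - m"] that by simp
  qed
  have "(1 + x) ^ N = (x + 1) ^ N" by (simp add: add.commute)
  also have "\<dots> = (\<Sum>k\<le>N. t k)" unfolding binomial_ring t_def by (simp add: mult.commute)
  also have "\<dots> \<le> (\<Sum>k\<le>N. t m)" by (rule sum_mono) (use all in auto)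
  also have "\<dots> = real (N + 1) * t m" by simp
  finally show ?thesis unfolding t_def by (simp add: mult.assoc)
qed


lemma ln_le_2sqrt:
  assumes "y > 0" shows "ln y \<le> 2 * sqrt y"
proof -
  have "ln y = 2 * ln (sqrt y)" using assms by (simp add: ln_sqrt)
  also have "ln (sqrt y) \<le> sqrt y - 1" using assms by (intro ln_le_minus_one) auto
  finally show ?thesis by simp
qed

lemma ln_le_3cube:
  assumes "y > 0" shows "ln y \<le> 3 * y powr (1/3::real)"
proof -
  have "ln (y powr (1/3::real)) = ln y / 3" using assms by (simp add: ln_powr)
  moreover have "ln (y powr (1/3::real)) \<le> y powr (1/3) - 1" using assms by (intro ln_le_minus_one) auto
  ultimately show ?thesis by simp
qed

lemma lnN_sqrt:
  fixes N m b :: real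
  assumes N: "N \<ge> 1" and m: "m > 0" and b: "b > 0"
  shows "ln (N + 1) \<le> 9 * b * N / m + m / b"
proof -
  have "ln (N + 1) \<le> 2 * sqrt (N + 1)" using N by (intro ln_le_2sqrt) auto
  also have "sqrt (N + 1) \<le> sqrt (2 * N)" using N by auto
  also have "sqrt (2 * N) = sqrt 2 * sqrt N" by (simp add: real_sqrt_mult)
  also have "sqrt 2 \<le> 3 / 2"
    by (rule real_le_lsqrt) (auto simp: power2_eq_square)
  then have "2 * (sqrt 2 * sqrt N) \<le> 2 * (3 / 2 * sqrt N)" using N by (intro mult_left_mono mult_right_mono) auto
  finally have L: "ln (N + 1) \<le> 3 * sqrt N" by simp
  have sN: "sqrt N > 0" using N by simp
  show ?thesis
  proof (cases "m \<ge> 3 * b * sqrt N")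
    case True
    then have "3 * sqrt N \<le> m / b" using b by (simp add: field_simps)
    moreover have "9 * b * N / m \<ge> 0" using b m N by simp
    ultimately show ?thesis using L by linarith
  next
    case False
    then have mlt: "m < 3 * b * sqrt N" by simp
    have "N = sqrt N * sqrt N" using N by simp
    then have "9 * b * N / m = 9 * b * sqrt N * sqrt N / m" by simp
    also have "9 * b * sqrt N * sqrt N / m \<ge> 9 * b * sqrt N * sqrt N / (3 * b * sqrt N)"
      using m mlt b sN by (intro divide_left_mono) auto
    also have "9 * b * sqrt N * sqrt N / (3 * b * sqrt N) = 3 * sqrt N" using b sN by simp
    finally have "3 * sqrt N \<le> 9 * b * N / m" .
    moreover have "m / b \<ge> 0" using b m by simp
    ultimately show ?thesis using L by linarith
  qed
qed

lemma lnN_cube: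
  fixes N m :: real
  assumes N: "N \<ge> 1" and m: "m > 0"
  shows "ln (N + 1) \<le> 92 * N / m + m\<^sup>2 / (128 * N)"
proof -
  define w where "w = N powr (1/3)"
  have w0: "w > 0" unfolding w_def using N by simp
  have w3: "w ^ 3 = N"
  proof -
    have "w ^ 3 = w powr (real 3)" using powr_realpow[OF w0, of 3] by simp
    also have "\<dots> = N powr (1/3 * 3)" unfolding w_def by (simp add: powr_powr)
    also have "\<dots> = N" using N by simp
    finally show ?thesis .
  qed
  have c2: "(2::real) powr (1/3) \<le> 4/3"
  proof -
    have e: "((4/3::real) ^ 3) powr (1/3) = 4/3"
    proof -
      define c where "c = (4/3::real)"
      have c0: "c > 0" unfolding c_def by simp
      have "c ^ 3 = c powr (real 3)" using powr_realpow[OF c0, of 3] by simp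
      then have "(c ^ 3) powr (1/3) = c powr (real 3 * (1/3))" by (simp add: powr_powr)
      also have "\<dots> = c" using c0 by simp
      finally show ?thesis unfolding c_def .
    qed
    have "(2::real) \<le> (4/3) ^ 3" by (simp add: eval_nat_numeral)
    then have "(2::real) powr (1/3) \<le> ((4/3::real) ^ 3) powr (1/3)" by (intro powr_mono2) auto
    then show ?thesis using e by simp
  qed
  have "ln (N + 1) \<le> 3 * (N + 1) powr (1/3)" using N by (intro ln_le_3cube) auto
  also have "(N + 1) powr (1/3) \<le> (2 * N) powr (1/3)" using N by (intro powr_mono2) auto
  also have "(2 * N) powr (1/3) = 2 powr (1/3) * w" unfolding w_def using N by (simp add: powr_mult)
  also have "2 powr (1/3) * w \<le> 4/3 * w" using c2 w0 by (intro mult_right_mono) auto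
  finally have L: "ln (N + 1) \<le> 4 * w" by simp
  show ?thesis
  proof (cases "m \<ge> 23 * w\<^sup>2")
    case True
    then have "m\<^sup>2 \<ge> (23 * w\<^sup>2)\<^sup>2" using w0 by (intro power_mono) auto
    then have "m\<^sup>2 / (128 * N) \<ge> (23 * w\<^sup>2)\<^sup>2 / (128 * N)" using N by (intro divide_right_mono) auto
    moreover have "(23 * w\<^sup>2)\<^sup>2 / (128 * N) = 529 / 128 * w"
      unfolding w3[symmetric] using w0 by (simp add: field_simps power2_eq_square power3_eq_cube)
    ultimately have "4 * w \<le> m\<^sup>2 / (128 * N)" using w0 by simp
    moreover have "92 * N / m \<ge> 0" using N m by simp
    ultimately show ?thesis using L by linarith
  next
    case False
    then have mlt: "m < 23 * w\<^sup>2" by simp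
    have "92 * N / m \<ge> 92 * N / (23 * w\<^sup>2)" using m mlt N w0 by (intro divide_left_mono) auto
    also have "92 * N / (23 * w\<^sup>2) = 4 * w"
      unfolding w3[symmetric] using w0 by (simp add: field_simps power2_eq_square power3_eq_cube)
    finally have "4 * w \<le> 92 * N / m" .
    moreover have "m\<^sup>2 / (128 * N) \<ge> 0" using N by simp
    ultimately show ?thesis using L by linarith
  qed
qed

lemma sum_binom_trunc:
  fixes y t :: real
  assumes t: "0 < t" "t \<le> 1" and y: "y \<ge> 0" and K: "K \<le> N"
  shows "(\<Sum>k\<le>K. real (N choose k) * y ^ k) \<le> (1 + y * t) ^ N / t ^ K"
proof -
  have "(\<Sum>k\<le>K. real (N choose k) * y ^ k) \<le> (\<Sum>k\<le>K. real (N choose k) * (y * t) ^ k / t ^ K)"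
  proof (rule sum_mono)
    fix k assume k: "k \<in> {..K}"
    have "t ^ K \<le> t ^ k" using t k by (intro power_decreasing) auto
    then have "1 \<le> t ^ k / t ^ K" using t by simp
    then have "real (N choose k) * y ^ k * 1 \<le> real (N choose k) * y ^ k * (t ^ k / t ^ K)"
      using y by (intro mult_left_mono) auto
    then show "real (N choose k) * y ^ k \<le> real (N choose k) * (y * t) ^ k / t ^ K"
      by (simp add: power_mult_distrib)
  qed
  also have "\<dots> \<le> (\<Sum>k\<le>N. real (N choose k) * (y * t) ^ k / t ^ K)"
    by (rule sum_mono2) (use K t y in auto)
  also have "\<dots> = (1 + y * t) ^ N / t ^ K"
  proof -
    have "(y * t + 1) ^ N = (\<Sum>k\<le>N. real (N choose k) * (y * t) ^ k)"
      unfolding binomial_ring by simp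
    then show ?thesis by (simp add: sum_divide_distrib add.commute)
  qed
  finally show ?thesis .
qed

lemma sum_binom_pos:
  fixes z :: real
  assumes z: "z \<ge> 0"
  shows "(\<Sum>k\<in>{1..K}. real (N choose k) * z ^ k) \<le> (1 + z) ^ N - 1"
proof -
  have "(\<Sum>k\<in>{1..K}. real (N choose k) * z ^ k) \<le> (\<Sum>k\<in>{1..max K N}. real (N choose k) * z ^ k)"
    by (rule sum_mono2) (use z in auto)
  also have "\<dots> = (\<Sum>k\<in>{1..N}. real (N choose k) * z ^ k)"
  proof (rule sum.mono_neutral_right)
    show "\<forall>i\<in>{1..max K N} - {1..N}. real (N choose i) * z ^ i = 0" by auto
  qed auto
  also have "\<dots> = (1 + z) ^ N - 1"
  proof -
    have "(z + 1) ^ N = (\<Sum>k\<le>N. real (N choose k) * z ^ k)"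
      unfolding binomial_ring by simp
    also have "{..N} = insert 0 {1..N}" by auto
    finally have "(z + 1) ^ N = 1 + (\<Sum>k\<in>{1..N}. real (N choose k) * z ^ k)" by simp
    then show ?thesis by (simp add: add.commute)
  qed
  finally show ?thesis .
qed

lemma inv_delta_pow:
  fixes \<delta> m :: real
  assumes d: "0 < \<delta>" "\<delta> \<le> 1" and K: "real K \<le> \<delta> * m"
  shows "(1 / \<delta>) ^ K \<le> exp (2 * sqrt \<delta> * m)"
proof -
  have l0: "ln (1 / \<delta>) \<ge> 0" using d by simp
  have l1: "ln (1 / \<delta>) \<le> 2 * sqrt (1 / \<delta>)" using d by (intro ln_le_2sqrt) auto
  have dm: "\<delta> * m \<ge> 0" using K by (metis of_nat_0_le_iff order_trans)
  have "(1 / \<delta>) ^ K = exp (real K * ln (1 / \<delta>))" using d by (simp add: exp_of_nat_mult)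
  also have "real K * ln (1 / \<delta>) \<le> \<delta> * m * ln (1 / \<delta>)" using K l0 by (rule mult_right_mono)
  also have "\<delta> * m * ln (1 / \<delta>) \<le> \<delta> * m * (2 * sqrt (1 / \<delta>))" using l1 dm by (rule mult_left_mono)
  also have "\<delta> * m * (2 * sqrt (1 / \<delta>)) = 2 * sqrt \<delta> * m"
  proof -
    have "\<delta> = sqrt \<delta> * sqrt \<delta>" using d by simp
    then have "\<delta> * sqrt (1 / \<delta>) = sqrt \<delta>" using d by (simp add: real_sqrt_divide field_simps)
    then show ?thesis by (simp add: algebra_simps)
  qed
  finally show ?thesis by simp
qed

lemma exp_minus_le_inv: "(t::real) > 0 \<Longrightarrow> exp (- t) \<le> 1 / t"
proof -
  assume t: "t > 0"
  have "t \<le> exp t" using exp_ge_add_one_self[of t] by linarith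
  then show ?thesis using t by (simp add: exp_minus field_simps)
qed

lemma pow_le_exp: "(z::real) \<ge> 0 \<Longrightarrow> (1 + z) ^ N \<le> exp (real N * z)"
proof -
  assume z: "z \<ge> 0"
  have "(1 + z) ^ N \<le> exp z ^ N"
    by (rule power_mono) (use z exp_ge_add_one_self[of z] in auto)
  also have "\<dots> = exp (real N * z)" by (simp add: exp_of_nat_mult)
  finally show ?thesis .
qed

lemma regime_S_A:
  fixes N m K :: nat and x \<gamma> :: real
  assumes m1: "1 \<le> m" and mN: "100 * m \<le> N"
    and x: "x = real m / real (N - m)"
    and g: "\<gamma> = x\<^sup>2 * real N / 64"
  shows "real (N + 1) * (\<Sum>k\<in>{1..K}. real (N choose k) * x ^ k * exp (- \<gamma> * real k))
         \<le> exp (284 * real N / real m)"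
proof -
  have Nm: "real (N - m) > 0" "real (N - m) \<le> real N" using m1 mN by auto
  have N1: "real N \<ge> 1" using m1 mN by simp
  have m0: "real m > 0" using m1 by simp
  have x0: "x > 0" using x Nm m1 by simp
  have xm: "x \<ge> real m / real N" unfolding x using Nm m0 by (intro divide_left_mono) auto
  have g0: "\<gamma> > 0" unfolding g using x0 N1 by simp
  define u where "u = real N * (x * exp (- \<gamma>))"
  have u0: "u \<ge> 0" unfolding u_def using x0 by simp
  have "(\<Sum>k\<in>{1..K}. real (N choose k) * x ^ k * exp (- \<gamma> * real k))
       = (\<Sum>k\<in>{1..K}. real (N choose k) * (x * exp (- \<gamma>)) ^ k)"
    by (rule sum.cong) (auto simp: power_mult_distrib exp_of_nat_mult[symmetric] mult.commute)
  also have "\<dots> \<le> (1 + x * exp (- \<gamma>)) ^ N - 1"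
    by (rule sum_binom_pos) (use x0 in simp)
  also have "\<dots> \<le> exp u - 1" unfolding u_def
    using pow_le_exp[of "x * exp (- \<gamma>)" N] x0 by simp
  also have "\<dots> \<le> u * exp u"
  proof -
    have "1 - u \<le> exp (- u)" using exp_ge_add_one_self[of "- u"] by simp
    then have "(1 - u) * exp u \<le> exp (- u) * exp u" by (intro mult_right_mono) auto
    then have "exp u - u * exp u \<le> 1" by (simp add: algebra_simps exp_minus_inverse)
    then show ?thesis by simp
  qed
  finally have S: "(\<Sum>k\<in>{1..K}. real (N choose k) * x ^ k * exp (- \<gamma> * real k)) \<le> u * exp u" .
  have gx: "\<gamma> = x * (real N * x) / 64" using g by (simp add: power2_eq_square)
  have u1: "u \<le> 64 * real N / real m"
  proof -
    have "exp (- \<gamma>) \<le> 1 / \<gamma>" using g0 by (rule exp_minus_le_inv)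
    then have "u \<le> real N * (x * (1 / \<gamma>))" unfolding u_def using x0 N1 by (intro mult_left_mono) auto
    also have "\<dots> = 64 / x" using gx x0 N1 g0 by (simp add: field_simps)
    also have "64 / x \<le> 64 / (real m / real N)" using xm m0 N1 x0 by (intro divide_left_mono) auto
    finally show ?thesis by simp
  qed
  have u2: "real N * x * exp (- (\<gamma> / 2)) \<le> 128 * real N / real m"
  proof -
    have "exp (- (\<gamma> / 2)) \<le> 1 / (\<gamma> / 2)" using g0 by (intro exp_minus_le_inv) auto
    then have "real N * x * exp (- (\<gamma> / 2)) \<le> real N * x * (1 / (\<gamma> / 2))" using x0 N1 by (intro mult_left_mono) auto
    also have "\<dots> = 128 / x" using gx x0 N1 g0 by (simp add: field_simps)
    also have "128 / x \<le> 128 / (real m / real N)" using xm m0 N1 x0 by (intro divide_left_mono) auto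
    finally show ?thesis by simp
  qed
  have u3: "real (N + 1) * exp (- (\<gamma> / 2)) \<le> exp (92 * real N / real m)"
  proof -
    have "x\<^sup>2 \<ge> (real m / real N)\<^sup>2" using xm m0 N1 by (intro power_mono) auto
    then have "\<gamma> / 2 \<ge> (real m / real N)\<^sup>2 * real N / 128" unfolding g using N1
      by (simp add: divide_right_mono mult_right_mono)
    also have "(real m / real N)\<^sup>2 * real N / 128 = (real m)\<^sup>2 / (128 * real N)"
      using N1 by (simp add: power2_eq_square field_simps)
    finally have ge: "\<gamma> / 2 \<ge> (real m)\<^sup>2 / (128 * real N)" .
    have "ln (real N + 1) \<le> 92 * real N / real m + (real m)\<^sup>2 / (128 * real N)"
      by (rule lnN_cube) (use N1 m0 in auto)
    then have "ln (real N + 1) - \<gamma> / 2 \<le> 92 * real N / real m" using ge by linarith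
    then have "exp (ln (real N + 1) - \<gamma> / 2) \<le> exp (92 * real N / real m)" by simp
    moreover have "exp (ln (real N + 1) - \<gamma> / 2) = real (N + 1) * exp (- (\<gamma> / 2))"
    proof -
      have "exp (ln (real N + 1) - \<gamma> / 2) = exp (ln (real N + 1)) * exp (- (\<gamma> / 2))"
        by (simp only: diff_conv_add_uminus exp_add)
      also have "exp (ln (real N + 1)) = real (N + 1)" using N1 by simp
      finally show ?thesis .
    qed
    ultimately show ?thesis by simp
  qed
  have uu: "real (N + 1) * u = (real (N + 1) * exp (- (\<gamma> / 2))) * (real N * x * exp (- (\<gamma> / 2)))"
    unfolding u_def by (simp add: algebra_simps exp_add[symmetric])
  have "real (N + 1) * (\<Sum>k\<in>{1..K}. real (N choose k) * x ^ k * exp (- \<gamma> * real k))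
      \<le> real (N + 1) * (u * exp u)" using S by (intro mult_left_mono) auto
  also have "\<dots> = (real (N + 1) * exp (- (\<gamma> / 2))) * (real N * x * exp (- (\<gamma> / 2))) * exp u"
    using uu by simp
  also have "\<dots> \<le> exp (92 * real N / real m) * exp (128 * real N / real m) * exp (64 * real N / real m)"
  proof (intro mult_mono)
    show "real N * x * exp (- (\<gamma> / 2)) \<le> exp (128 * real N / real m)"
      using u2 exp_ge_add_one_self[of "128 * real N / real m"] by linarith
    show "exp u \<le> exp (64 * real N / real m)" using u1 by simp
  qed (use u3 x0 N1 in auto)
  also have "\<dots> = exp (284 * real N / real m)" by (simp add: exp_add[symmetric] add_divide_distrib[symmetric])
  finally show ?thesis .
qed


lemma sum_pen_B:
  fixes N m K :: nat and x \<delta> :: real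
  assumes x: "x \<ge> 0" and d: "0 < \<delta>" "\<delta> \<le> 1" and K: "real K \<le> \<delta> * real m" and KN: "K \<le> N"
  shows "(\<Sum>k\<in>{1..K}. real (N choose k) * x ^ k) \<le> exp (real N * x * \<delta> + 2 * sqrt \<delta> * real m)"
proof -
  have "(\<Sum>k\<in>{1..K}. real (N choose k) * x ^ k) \<le> (\<Sum>k\<le>K. real (N choose k) * x ^ k)"
    by (rule sum_mono2) (use x in auto)
  also have "\<dots> \<le> (1 + x * \<delta>) ^ N / \<delta> ^ K" by (rule sum_binom_trunc) (use d x KN in auto)
  also have "\<dots> = (1 + x * \<delta>) ^ N * (1 / \<delta>) ^ K" by (simp add: power_one_over)
  also have "\<dots> \<le> exp (real N * (x * \<delta>)) * exp (2 * sqrt \<delta> * real m)"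
  proof (rule mult_mono)
    show "(1 + x * \<delta>) ^ N \<le> exp (real N * (x * \<delta>))" by (rule pow_le_exp) (use x d in simp)
    show "(1 / \<delta>) ^ K \<le> exp (2 * sqrt \<delta> * real m)" by (rule inv_delta_pow) (use d K in auto)
  qed (use d in auto)
  also have "\<dots> = exp (real N * x * \<delta> + 2 * sqrt \<delta> * real m)" by (simp add: exp_add mult.assoc)
  finally show ?thesis .
qed

lemma regime_S_B:
  fixes N m K L :: nat and x \<gamma> \<delta> :: real
  assumes m1: "1 \<le> m" and mN: "100 * m \<le> N"
    and x: "x = real m / real (N - m)"
    and g: "\<gamma> = x\<^sup>2 * real N / 64"
    and L: "real L \<ge> 1 / (6 * x)"
    and d: "0 < \<delta>" "\<delta> \<le> 1" "sqrt \<delta> \<le> 1 / 3072" and K: "real K \<le> \<delta> * real m"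
  shows "real (N + 1) * (\<Sum>k\<in>{1..K}. real (N choose k) * x ^ k * exp (- \<gamma> * real L))
         \<le> exp (6912 * real N / real m)"
proof -
  have Nm: "real (N - m) > 0" "2 * real (N - m) \<ge> real N" using m1 mN by auto
  have N1: "real N \<ge> 1" using m1 mN by simp
  have m0: "real m > 0" using m1 by simp
  have x0: "x > 0" using x Nm m1 by simp
  have xm: "x * real N \<ge> real m"
  proof -
    have "real m / real N \<le> x" unfolding x using Nm m0 by (intro divide_left_mono) auto
    then show ?thesis using N1 by (simp add: field_simps)
  qed
  have xN2: "real N * x \<le> 2 * real m"
  proof -
    have "real N * x = real N * real m / real (N - m)" unfolding x by simp
    also have "\<dots> \<le> 2 * real (N - m) * real m / real (N - m)"
      using Nm m0 by (intro divide_right_mono mult_right_mono) auto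
    also have "\<dots> = 2 * real m"
    proof -
      have gen: "a > 0 \<Longrightarrow> 2 * a * b / a = 2 * b" for a b :: real by simp
      show ?thesis by (rule gen[OF Nm(1)])
    qed
    finally show ?thesis .
  qed
  have KN: "K \<le> N"
  proof -
    have "\<delta> * real m \<le> 1 * real m" using d m0 by (intro mult_right_mono) auto
    then have "real K \<le> real m" using K by linarith
    then show ?thesis using mN by simp
  qed
  have sd: "\<delta> \<le> sqrt \<delta>"
  proof -
    have s1: "sqrt \<delta> \<le> 1" "sqrt \<delta> \<ge> 0" using d by auto
    have "\<delta> = sqrt \<delta> * sqrt \<delta>" using d by simp
    also have "\<dots> \<le> sqrt \<delta> * 1" using s1 by (intro mult_left_mono) auto
    finally show ?thesis by simp
  qed
  have gL: "\<gamma> * real L \<ge> real m / 384"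
  proof -
    have "\<gamma> \<ge> 0" unfolding g by simp
    then have "\<gamma> * real L \<ge> \<gamma> * (1 / (6 * x))" using L by (intro mult_left_mono) auto
    also have "\<gamma> * (1 / (6 * x)) = x * real N / 384" unfolding g using x0 by (simp add: power2_eq_square field_simps)
    finally show ?thesis using xm by simp
  qed
  have sumB: "(\<Sum>k\<in>{1..K}. real (N choose k) * x ^ k) \<le> exp (real N * x * \<delta> + 2 * sqrt \<delta> * real m)"
    by (rule sum_pen_B) (use x0 d K KN in auto)
  have e1: "real N * x * \<delta> + 2 * sqrt \<delta> * real m \<le> 4 * sqrt \<delta> * real m"
  proof -
    have "real N * x * \<delta> \<le> 2 * real m * \<delta>" using xN2 d by (intro mult_right_mono) auto
    also have "\<dots> \<le> 2 * real m * sqrt \<delta>" using sd m0 by (intro mult_left_mono) auto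
    finally show ?thesis by simp
  qed
  have e2: "4 * sqrt \<delta> * real m \<le> real m / 768"
  proof -
    have "4 * sqrt \<delta> \<le> 1 / 768" using d by simp
    then have "4 * sqrt \<delta> * real m \<le> 1 / 768 * real m" using m0 by (intro mult_right_mono) auto
    then show ?thesis by simp
  qed
  have ln1: "ln (real N + 1) \<le> 6912 * real N / real m + real m / 768"
    using lnN_sqrt[of "real N" "real m" 768] N1 m0 by simp
  have r1: "(\<Sum>k\<in>{1..K}. real (N choose k) * x ^ k * exp (- \<gamma> * real L))
     = (\<Sum>k\<in>{1..K}. real (N choose k) * x ^ k) * exp (- \<gamma> * real L)"
    by (simp add: sum_distrib_right)
  have r2: "real (N + 1) = exp (ln (real N + 1))" using N1 by simp
  have "real (N + 1) * (\<Sum>k\<in>{1..K}. real (N choose k) * x ^ k * exp (- \<gamma> * real L))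
      = exp (ln (real N + 1)) * exp (- \<gamma> * real L) * (\<Sum>k\<in>{1..K}. real (N choose k) * x ^ k)"
    unfolding r1 r2 by (simp only: mult_ac)
  also have "\<dots> \<le> exp (ln (real N + 1)) * exp (- \<gamma> * real L) * exp (real N * x * \<delta> + 2 * sqrt \<delta> * real m)"
    using sumB by (intro mult_left_mono) auto
  also have "\<dots> = exp (ln (real N + 1) + (- \<gamma> * real L) + (real N * x * \<delta> + 2 * sqrt \<delta> * real m))"
    by (simp only: exp_add)
  also have "\<dots> \<le> exp (6912 * real N / real m)"
  proof -
    have "ln (real N + 1) + (- \<gamma> * real L) + (real N * x * \<delta> + 2 * sqrt \<delta> * real m) \<le> 6912 * real N / real m"
      using ln1 gL e1 e2 by linarith
    then show ?thesis by simp
  qed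
  finally show ?thesis .
qed

lemma regime_D_sum:
  fixes N m K :: nat and x \<delta> :: real
  assumes m1: "1 \<le> m" and mN: "m \<le> N" and x: "0 \<le> x" "x \<le> 20"
    and d: "0 < \<delta>" "\<delta> \<le> 1" "sqrt \<delta> \<le> 1 / 2^50" and K: "real K \<le> \<delta> * real m"
  shows "real (N + 1) * (\<Sum>k\<in>{1..K}. real (N choose k) * x ^ k * exp (- (real N / 2^40)))
         \<le> exp (9 * 2^42 * real N / real m)"
proof -
  have N1: "real N \<ge> 1" using m1 mN by simp
  have m0: "real m > 0" using m1 by simp
  have KN: "K \<le> N"
  proof -
    have "\<delta> * real m \<le> 1 * real m" using d m0 by (intro mult_right_mono) auto
    then have "real K \<le> real m" using K by linarith
    then show ?thesis using mN by simp
  qed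
  have sd: "\<delta> \<le> sqrt \<delta>"
  proof -
    have s1: "sqrt \<delta> \<le> 1" "sqrt \<delta> \<ge> 0" using d by auto
    have "\<delta> = sqrt \<delta> * sqrt \<delta>" using d by simp
    also have "\<dots> \<le> sqrt \<delta> * 1" using s1 by (intro mult_left_mono) auto
    finally show ?thesis by simp
  qed
  have sumB: "(\<Sum>k\<in>{1..K}. real (N choose k) * x ^ k) \<le> exp (real N * x * \<delta> + 2 * sqrt \<delta> * real m)"
    by (rule sum_pen_B) (use x d K KN in auto)
  have e1: "real N * x * \<delta> + 2 * sqrt \<delta> * real m \<le> 22 * sqrt \<delta> * real N"
  proof -
    have "real N * x * \<delta> \<le> real N * 20 * sqrt \<delta>"
      using x d sd N1 by (intro mult_mono) auto
    moreover have "2 * sqrt \<delta> * real m \<le> 2 * sqrt \<delta> * real N" using mN d by (intro mult_left_mono) auto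
    ultimately show ?thesis by (simp add: algebra_simps)
  qed
  have e2: "22 * sqrt \<delta> * real N \<le> real N / 2^41"
  proof -
    have "22 * sqrt \<delta> \<le> 1 / 2^41" using d by simp
    then have "22 * sqrt \<delta> * real N \<le> 1 / 2^41 * real N" using N1 by (intro mult_right_mono) auto
    then show ?thesis by simp
  qed
  have ln1: "ln (real N + 1) \<le> 9 * 2^42 * real N / real m + real m / 2^42"
    using lnN_sqrt[of "real N" "real m" "2^42"] N1 m0 by simp
  have e3: "real m / 2^42 \<le> real N / 2^42" using mN by (simp add: divide_right_mono)
  have r1: "(\<Sum>k\<in>{1..K}. real (N choose k) * x ^ k * exp (- (real N / 2^40)))
     = (\<Sum>k\<in>{1..K}. real (N choose k) * x ^ k) * exp (- (real N / 2^40))"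
    by (simp add: sum_distrib_right)
  have r2: "real (N + 1) = exp (ln (real N + 1))" using N1 by simp
  have "real (N + 1) * (\<Sum>k\<in>{1..K}. real (N choose k) * x ^ k * exp (- (real N / 2^40)))
      = exp (ln (real N + 1)) * exp (- (real N / 2^40)) * (\<Sum>k\<in>{1..K}. real (N choose k) * x ^ k)"
    unfolding r1 r2 by (simp only: mult_ac)
  also have "\<dots> \<le> exp (ln (real N + 1)) * exp (- (real N / 2^40)) * exp (real N * x * \<delta> + 2 * sqrt \<delta> * real m)"
    using sumB by (intro mult_left_mono) auto
  also have "\<dots> = exp (ln (real N + 1) + (- (real N / 2^40)) + (real N * x * \<delta> + 2 * sqrt \<delta> * real m))"
    by (simp only: exp_add)
  also have "\<dots> \<le> exp (9 * 2^42 * real N / real m)"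
  proof -
    have "real N / 2^41 - real N / 2^40 + real N / 2^42 \<le> 0" using N1 by simp
    then have "ln (real N + 1) + (- (real N / 2^40)) + (real N * x * \<delta> + 2 * sqrt \<delta> * real m) \<le> 9 * 2^42 * real N / real m"
      using ln1 e1 e2 e3 by linarith
    then show ?thesis by simp
  qed
  finally show ?thesis .
qed

lemma family_decomp:
  fixes n m :: nat and \<delta> :: real and g :: "nat \<Rightarrow> real"
  assumes n: "even n" and g0: "\<And>k. g k \<ge> 0"
    and gb: "\<And>E. E \<subseteq> evens_upto n \<Longrightarrow> E \<noteq> {} \<Longrightarrow> real (card E) \<le> \<delta> * real m \<Longrightarrow>
      real (card {A. A \<subseteq> odds_upto n \<and> indep (adjE E) A \<and> card A = m - card E}) \<le> g (card E)"
  shows "real (card {I. I \<subseteq> {1..n} \<and> sum_free I \<and> card I = m \<and> real (card (I - odds_upto n)) \<le> \<delta> * real m})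
    \<le> real ((n div 2) choose m) + (\<Sum>k\<in>{1..nat \<lfloor>\<delta> * real m\<rfloor>}. real ((n div 2) choose k) * g k)"
proof -
  define Od where "Od = odds_upto n"
  define Ev where "Ev = evens_upto n"
  define K where "K = nat \<lfloor>\<delta> * real m\<rfloor>"
  define F where "F = {I. I \<subseteq> {1..n} \<and> sum_free I \<and> card I = m \<and> real (card (I - odds_upto n)) \<le> \<delta> * real m}"
  define F0 where "F0 = {A. A \<subseteq> Od \<and> card A = m}"
  define \<E> where "\<E> = {E. E \<subseteq> Ev \<and> card E \<in> {1..K}}"
  define \<A> where "\<A> E = {A. A \<subseteq> Od \<and> indep (adjE E) A \<and> card A = m - card E}" for E
  have finO: "finite Od" unfolding Od_def by (rule finite_odds)
  have finEv: "finite Ev" unfolding Ev_def by (rule finite_evens)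
  have cardO: "card Od = n div 2" unfolding Od_def using n by (rule card_odds)
  have cardEv: "card Ev = n div 2" unfolding Ev_def by (rule card_evens)
  have OEv: "{1..n} = Od \<union> Ev" "Od \<inter> Ev = {}" unfolding Od_def Ev_def odds_upto_def evens_upto_def by auto
  have sub: "F \<subseteq> F0 \<union> (\<Union>E\<in>\<E>. (\<lambda>A. A \<union> E) ` \<A> E)"
  proof
    fix I assume I: "I \<in> F"
    then have I1: "I \<subseteq> {1..n}" "sum_free I" "card I = m" "real (card (I - Od)) \<le> \<delta> * real m"
      unfolding F_def Od_def by auto
    define E where "E = I \<inter> Ev"
    define A where "A = I \<inter> Od"
    have IAE: "I = A \<union> E" unfolding A_def E_def using I1(1) OEv(1) by blast
    have IO: "I - Od = E" unfolding E_def using I1(1) OEv by blast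
    have finI: "finite I" using I1(1) finite_subset by blast
    have AEd: "A \<inter> E = {}" unfolding A_def E_def using OEv(2) by blast
    have cardI: "card I = card A + card E"
      unfolding IAE by (rule card_Un_disjoint) (use finI AEd in \<open>simp_all add: A_def E_def\<close>)
    have AI: "A \<subseteq> I" "E \<subseteq> I" "A \<subseteq> Od" "E \<subseteq> Ev" unfolding A_def E_def by auto
    show "I \<in> F0 \<union> (\<Union>E\<in>\<E>. (\<lambda>A. A \<union> E) ` \<A> E)"
    proof (cases "E = {}")
      case True
      then have "I = A" using IAE by simp
      then have "I \<in> F0" unfolding F0_def using AI I1(3) by simp
      then show ?thesis by blast
    next
      case False
      have finE: "finite E" using finI AI(2) finite_subset by blast
      have c1: "card E \<ge> 1" using False finE by (simp add: Suc_le_eq card_gt_0_iff)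
      have c2: "card E \<le> K" unfolding K_def using I1(4) IO by (intro le_nat_floor) simp
      have "E \<in> \<E>" unfolding \<E>_def using c1 c2 AI(4) by simp
      moreover have "A \<in> \<A> E"
      proof -
        have "indep (adjE E) A" by (rule sum_free_indep[OF I1(2) AI(1) AI(2)])
        moreover have "card A = m - card E" using cardI I1(3) by simp
        ultimately show ?thesis unfolding \<A>_def using AI(3) by simp
      qed
      ultimately show ?thesis using IAE by blast
    qed
  qed
  have finF0: "finite F0" unfolding F0_def by (rule finite_subset[of _ "Pow Od"]) (use finO in auto)
  have finE: "finite \<E>" unfolding \<E>_def by (rule finite_subset[of _ "Pow Ev"]) (use finEv in auto)
  have finA: "finite (\<A> E)" for E unfolding \<A>_def by (rule finite_subset[of _ "Pow Od"]) (use finO in auto)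
  have "card F \<le> card (F0 \<union> (\<Union>E\<in>\<E>. (\<lambda>A. A \<union> E) ` \<A> E))"
    by (rule card_mono[OF _ sub]) (use finF0 finE finA in auto)
  also have "\<dots> \<le> card F0 + card (\<Union>E\<in>\<E>. (\<lambda>A. A \<union> E) ` \<A> E)" by (rule card_Un_le)
  also have "card (\<Union>E\<in>\<E>. (\<lambda>A. A \<union> E) ` \<A> E) \<le> (\<Sum>E\<in>\<E>. card ((\<lambda>A. A \<union> E) ` \<A> E))"
    by (rule card_UN_le[OF finE])
  also have "\<dots> \<le> (\<Sum>E\<in>\<E>. card (\<A> E))" by (intro sum_mono card_image_le finA)
  finally have c0: "card F \<le> card F0 + (\<Sum>E\<in>\<E>. card (\<A> E))" by simp
  have c: "real (card F) \<le> real (card F0) + (\<Sum>E\<in>\<E>. real (card (\<A> E)))"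
    using c0 by (simp only: of_nat_sum[symmetric] of_nat_add[symmetric] of_nat_le_iff)
  have "(\<Sum>E\<in>\<E>. real (card (\<A> E))) \<le> (\<Sum>E\<in>\<E>. g (card E))"
  proof (rule sum_mono)
    fix E assume E: "E \<in> \<E>"
    then have "E \<subseteq> Ev" "card E \<ge> 1" "card E \<le> K" unfolding \<E>_def by auto
    moreover have "real (card E) \<le> \<delta> * real m"
    proof -
      have "real (card E) \<le> real K" using \<open>card E \<le> K\<close> by simp
      also have "real K \<le> \<delta> * real m"
      proof (cases "\<delta> * real m \<ge> 0")
        case True then show ?thesis unfolding K_def by (simp add: of_nat_floor)
      next
        case False then have "K = 0" unfolding K_def by simp
        then show ?thesis using \<open>card E \<ge> 1\<close> \<open>card E \<le> K\<close> by simp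
      qed
      finally show ?thesis .
    qed
    ultimately show "real (card (\<A> E)) \<le> g (card E)" unfolding \<A>_def Ev_def Od_def
      by (intro gb) auto
  qed
  also have "(\<Sum>E\<in>\<E>. g (card E)) = (\<Sum>k\<in>{1..K}. \<Sum>E\<in>{E. E \<subseteq> Ev \<and> card E = k}. g (card E))"
  proof -
    have eq: "\<E> = (\<Union>k\<in>{1..K}. {E. E \<subseteq> Ev \<and> card E = k})" unfolding \<E>_def by auto
    show ?thesis unfolding eq
      by (rule sum.UNION_disjoint) (auto intro!: finite_subset[of _ "Pow Ev"] simp: finEv)
  qed
  also have "\<dots> = (\<Sum>k\<in>{1..K}. real ((n div 2) choose k) * g k)"
  proof (rule sum.cong[OF refl])
    fix k assume "k \<in> {1..K}"
    have "(\<Sum>E\<in>{E. E \<subseteq> Ev \<and> card E = k}. g (card E)) = (\<Sum>E\<in>{E. E \<subseteq> Ev \<and> card E = k}. g k)"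
      by (rule sum.cong) auto
    also have "\<dots> = real (card {E. E \<subseteq> Ev \<and> card E = k}) * g k" by simp
    also have "card {E. E \<subseteq> Ev \<and> card E = k} = (n div 2) choose k"
      using n_subsets[OF finEv, of k] cardEv by simp
    finally show "(\<Sum>E\<in>{E. E \<subseteq> Ev \<and> card E = k}. g (card E)) = real ((n div 2) choose k) * g k" .
  qed
  finally have c2: "(\<Sum>E\<in>\<E>. real (card (\<A> E))) \<le> (\<Sum>k\<in>{1..K}. real ((n div 2) choose k) * g k)" .
  have "card F0 = (n div 2) choose m" unfolding F0_def using n_subsets[OF finO, of m] cardO by simp
  then show ?thesis using c c2 unfolding F_def K_def by simp
qed

lemma indep_count_bound:
  fixes n a :: nat and E :: "nat set" and x :: real
  assumes n: "even n" and E: "E \<subseteq> evens_upto n" and x: "x > 0"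
    and cond: "real (3 * card E) * (x / (1 + x) ^ (3 * card E + 1)) \<le> 1"
  shows "real (card {A. A \<subseteq> odds_upto n \<and> indep (adjE E) A \<and> card A = a}) * x ^ a
     \<le> (1 + x) ^ (n div 2) * exp (- (x\<^sup>2 / (4 * (1 + x) ^ (3 * card E + 2)))
          * ((real (n div 2) * real (card E) - real (card E)) / 2))"
proof -
  let ?\<beta> = "x\<^sup>2 / (4 * (1 + x) ^ (3 * card E + 2))"
  have finE: "finite E" using E finite_evens finite_subset by blast
  have "real (card {A. A \<subseteq> odds_upto n \<and> indep (adjE E) A \<and> card A = a}) * x ^ a
      \<le> Zp (adjE E) x (odds_upto n)" by (rule count_indep_le) (use x finite_odds in auto)
  also have "\<dots> \<le> (1 + x) ^ card (odds_upto n) * exp (- ?\<beta> * real (Pd (adjE E) (odds_upto n)))"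
    by (rule Zp_main) (use finite_odds adjE_irr adjE_sym x deg_upper[OF finE] cond in auto)
  also have "\<dots> \<le> (1 + x) ^ (n div 2) * exp (- ?\<beta> * ((real (n div 2) * real (card E) - real (card E)) / 2))"
  proof -
    have b0: "?\<beta> \<ge> 0" using x by simp
    have "(n div 2) * card E \<le> 2 * Pd (adjE E) (odds_upto n) + card E" by (rule Pd_lower[OF n E])
    then have "real (n div 2) * real (card E) \<le> 2 * real (Pd (adjE E) (odds_upto n)) + real (card E)"
      by (metis of_nat_add of_nat_le_iff of_nat_mult of_nat_numeral)
    then have "(real (n div 2) * real (card E) - real (card E)) / 2 \<le> real (Pd (adjE E) (odds_upto n))" by simp
    then have "?\<beta> * ((real (n div 2) * real (card E) - real (card E)) / 2) \<le> ?\<beta> * real (Pd (adjE E) (odds_upto n))"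
      using b0 by (rule mult_left_mono)
    then have "exp (- ?\<beta> * real (Pd (adjE E) (odds_upto n))) \<le> exp (- ?\<beta> * ((real (n div 2) * real (card E) - real (card E)) / 2))"
      by simp
    then show ?thesis using card_odds[OF n] x by (simp add: mult_left_mono)
  qed
  finally show ?thesis .
qed


lemma indep_count_mono:
  assumes "E' \<subseteq> E"
  shows "card {A. A \<subseteq> odds_upto n \<and> indep (adjE E) A \<and> card A = a}
       \<le> card {A. A \<subseteq> odds_upto n \<and> indep (adjE E') A \<and> card A = a}"
proof (rule card_mono)
  show "finite {A. A \<subseteq> odds_upto n \<and> indep (adjE E') A \<and> card A = a}"
    by (rule finite_subset[of _ "Pow (odds_upto n)"]) (use finite_odds in auto)
  show "{A. A \<subseteq> odds_upto n \<and> indep (adjE E) A \<and> card A = a}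
       \<subseteq> {A. A \<subseteq> odds_upto n \<and> indep (adjE E') A \<and> card A = a}"
    using adjE_mono[OF assms] unfolding indep_def by blast
qed

lemma div_by_pow:
  fixes c B x :: real
  assumes x: "x > 0" and km: "k \<le> m" and h: "c * x ^ (m - k) \<le> B * x ^ m"
  shows "c \<le> B * x ^ k"
proof -
  have "x ^ m = x ^ (m - k) * x ^ k" using km by (simp add: power_add[symmetric])
  then have "c * x ^ (m - k) \<le> (B * x ^ k) * x ^ (m - k)" using h by (simp add: algebra_simps)
  then show ?thesis using x by simp
qed

lemma per_E_D:
  fixes n m :: nat and E :: "nat set"
  assumes n: "even n" and N: "N = n div 2" and m1: "1 \<le> m" and mN1: "N < 100 * m" and mN2: "20 * m < 19 * N"
    and E: "E \<subseteq> evens_upto n" "E \<noteq> {}" "card E \<le> m"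
  defines "x \<equiv> real m / real (N - m)"
  shows "real (card {A. A \<subseteq> odds_upto n \<and> indep (adjE E) A \<and> card A = m - card E})
      \<le> real (N + 1) * real (N choose m) * x ^ card E * exp (- (real N / 2^40))"
proof -
  obtain e where e: "e \<in> E" using E by blast
  have Nm: "real (N - m) > 0" "20 * real (N - m) > real N" using mN2 by auto
  have "N \<ge> 2" using m1 mN2 by linarith
  then have N2: "real N \<ge> 2" by simp
  have x0: "x > 0" unfolding x_def using Nm m1 by simp
  have xlo: "x \<ge> 1/100"
  proof -
    have "real m / real N \<le> x" unfolding x_def using Nm m1 by (intro divide_left_mono) auto
    moreover have "1/100 \<le> real m / real N" using mN1 N2 by (simp add: field_simps)
    ultimately show ?thesis by linarith
  qed
  have xhi: "x \<le> 20"
  proof -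
    have "x = real m / real (N - m)" by (simp add: x_def)
    also have "\<dots> \<le> real N / real (N - m)" using mN2 Nm by (intro divide_right_mono) auto
    also have "\<dots> \<le> 20" using Nm by (simp add: field_simps)
    finally show ?thesis .
  qed
  have E1: "{e} \<subseteq> evens_upto n" using e E by auto
  have cond: "real (3 * card {e}) * (x / (1 + x) ^ (3 * card {e} + 1)) \<le> 1"
  proof -
    have "1 + real 4 * x \<le> (1 + x) ^ 4" by (rule Bernoulli_inequality) (use x0 in simp)
    then have "3 * x \<le> (1 + x) ^ 4" using x0 by simp
    then show ?thesis using x0 by (simp add: field_simps)
  qed
  have "real (card {A. A \<subseteq> odds_upto n \<and> indep (adjE E) A \<and> card A = m - card E}) * x ^ (m - card E)
     \<le> real (card {A. A \<subseteq> odds_upto n \<and> indep (adjE {e}) A \<and> card A = m - card E}) * x ^ (m - card E)"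
    using indep_count_mono[of "{e}" E n "m - card E"] e x0 by (intro mult_right_mono) auto
  also have "\<dots> \<le> (1 + x) ^ N * exp (- (x\<^sup>2 / (4 * (1 + x) ^ 5)) * ((real N - 1) / 2))"
    using indep_count_bound[OF n E1 x0 cond, of "m - card E"] N by (simp add: eval_nat_numeral)
  also have "\<dots> \<le> (1 + x) ^ N * exp (- (real N / 2^40))"
  proof -
    have p5: "(1 + x) ^ 5 \<le> 21 ^ 5" using xhi x0 by (intro power_mono) auto
    have x2: "x\<^sup>2 \<ge> (1/100)\<^sup>2" using xlo by (intro power_mono) auto
    have "1 / 2^38 \<le> (1/100::real)\<^sup>2 / (4 * 21 ^ 5)" by (simp add: power2_eq_square)
    also have "\<dots> \<le> x\<^sup>2 / (4 * (1 + x) ^ 5)"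
      using p5 x2 x0 by (intro frac_le) auto
    finally have b: "1 / 2^38 \<le> x\<^sup>2 / (4 * (1 + x) ^ 5)" .
    have "real N / 2^40 = 1 / 2^38 * (real N / 4)" by simp
    also have "\<dots> \<le> x\<^sup>2 / (4 * (1 + x) ^ 5) * ((real N - 1) / 2)"
      using b N2 by (intro mult_mono) auto
    finally have "- (x\<^sup>2 / (4 * (1 + x) ^ 5)) * ((real N - 1) / 2) \<le> - (real N / 2^40)" by simp
    then show ?thesis using x0 by (intro mult_left_mono) auto
  qed
  also have "\<dots> \<le> real (N + 1) * real (N choose m) * x ^ m * exp (- (real N / 2^40))"
  proof -
    have "(1 + x) ^ N \<le> real (N + 1) * real (N choose m) * x ^ m"
      unfolding x_def by (rule mode_lemma) (use m1 mN2 in auto)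
    then show ?thesis by (intro mult_right_mono) auto
  qed
  finally have h0: "real (card {A. A \<subseteq> odds_upto n \<and> indep (adjE E) A \<and> card A = m - card E}) * x ^ (m - card E)
     \<le> real (N + 1) * real (N choose m) * x ^ m * exp (- (real N / 2^40))" .
  have h: "real (card {A. A \<subseteq> odds_upto n \<and> indep (adjE E) A \<and> card A = m - card E}) * x ^ (m - card E)
     \<le> (real (N + 1) * real (N choose m) * exp (- (real N / 2^40))) * x ^ m"
    using h0 by (simp only: mult_ac)
  have "real (card {A. A \<subseteq> odds_upto n \<and> indep (adjE E) A \<and> card A = m - card E})
     \<le> (real (N + 1) * real (N choose m) * exp (- (real N / 2^40))) * x ^ card E"
    by (rule div_by_pow[OF x0 E(3) h])
  then show ?thesis by (simp only: mult_ac)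
qed


lemma per_E_S:
  fixes n m :: nat and E :: "nat set"
  assumes n: "even n" and N: "N = n div 2" and m1: "1 \<le> m" and mN: "100 * m \<le> N"
    and E: "E \<subseteq> evens_upto n" "E \<noteq> {}" "card E \<le> m"
  defines "x \<equiv> real m / real (N - m)"
  defines "\<gamma> \<equiv> x\<^sup>2 * real N / 64"
  defines "L \<equiv> nat \<lfloor>1 / (3 * x)\<rfloor>"
  shows "real (card {A. A \<subseteq> odds_upto n \<and> indep (adjE E) A \<and> card A = m - card E})
      \<le> real (N + 1) * real (N choose m) * x ^ card E * (exp (- \<gamma> * real (card E)) + exp (- \<gamma> * real L))"
proof -
  define k where "k = card E"
  define k' where "k' = min k L"
  have Nm: "real (N - m) \<ge> 99 * real m" using mN by auto
  have m0: "real m > 0" using m1 by simp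
  have N2: "real N \<ge> 2" using m1 mN by simp
  have x0: "x > 0" unfolding x_def using Nm m0 by simp
  have xhi: "x \<le> 1/99" unfolding x_def using Nm m0 by (simp add: field_simps)
  have L1: "real L \<le> 1 / (3 * x)" unfolding L_def using x0 by (simp add: of_nat_floor)
  have L33: "L \<ge> 1"
  proof -
    have "1 \<le> 1 / (3 * x)" using x0 xhi by (simp add: field_simps)
    then show ?thesis unfolding L_def by (simp add: le_nat_floor)
  qed
  have finE: "finite E" using E finite_evens finite_subset by blast
  have k1: "k \<ge> 1" unfolding k_def using E finE by (simp add: Suc_le_eq card_gt_0_iff)
  have k'1: "k' \<ge> 1" unfolding k'_def using k1 L33 by simp
  obtain E' where E': "E' \<subseteq> E" "card E' = k'" "finite E'"
    using obtain_subset_with_card_n[of k' E] k'_def k_def by auto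
  have E'ev: "E' \<subseteq> evens_upto n" using E' E by auto
  have xpow: "x / (1 + x) ^ j \<le> x" for j
    using x0 by (simp add: divide_le_eq one_le_power)
  have cond: "real (3 * card E') * (x / (1 + x) ^ (3 * card E' + 1)) \<le> 1"
  proof -
    have "real (3 * card E') * (x / (1 + x) ^ (3 * card E' + 1)) \<le> real (3 * card E') * x"
      using xpow[of "3 * card E' + 1"] by (intro mult_left_mono) auto
    also have "\<dots> = real (3 * k') * x" using E'(2) by simp
    also have "\<dots> \<le> 3 * real L * x" unfolding k'_def using x0 by (intro mult_right_mono) auto
    also have "\<dots> \<le> 3 * (1 / (3 * x)) * x" using L1 x0 by (intro mult_right_mono) auto
    also have "\<dots> = 1" using x0 by simp
    finally show ?thesis .
  qed
  have bnd: "(1 + x) ^ (3 * k' + 2) \<le> 4"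
  proof -
    have "(1 + x) ^ (3 * k') \<le> exp (real (3 * k') * x)" by (rule pow_le_exp) (use x0 in simp)
    also have "real (3 * k') * x \<le> 1"
    proof -
      have "real (3 * k') * x \<le> 3 * real L * x" unfolding k'_def using x0 by (intro mult_right_mono) auto
      also have "\<dots> \<le> 3 * (1 / (3 * x)) * x" using L1 x0 by (intro mult_right_mono) auto
      also have "\<dots> = 1" using x0 by simp
      finally show ?thesis .
    qed
    then have "exp (real (3 * k') * x) \<le> exp 1" by simp
    also have "exp 1 \<le> (3::real)" by (rule exp_le)
    finally have a: "(1 + x) ^ (3 * k') \<le> 3" .
    have b: "(1 + x) ^ 2 \<le> 4 / 3"
    proof -
      have "(1 + x) ^ 2 \<le> (1 + 1/99) ^ 2" using x0 xhi by (intro power_mono) auto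
      also have "\<dots> \<le> 4 / 3" by (simp add: power2_eq_square)
      finally show ?thesis .
    qed
    have "(1 + x) ^ (3 * k' + 2) = (1 + x) ^ (3 * k') * (1 + x) ^ 2" by (rule power_add)
    also have "\<dots> \<le> 3 * (4 / 3)" using a b x0 by (intro mult_mono) auto
    finally show ?thesis by simp
  qed
  have pen: "\<gamma> * real k' \<le> x\<^sup>2 / (4 * (1 + x) ^ (3 * k' + 2)) * ((real N * real k' - real k') / 2)"
  proof -
    have "x\<^sup>2 / 16 \<le> x\<^sup>2 / (4 * (1 + x) ^ (3 * k' + 2))"
      using bnd x0 by (intro divide_left_mono) auto
    moreover have "real N * real k' / 4 \<le> (real N * real k' - real k') / 2"
    proof -
      have "real k' \<le> real N * real k' / 2" using N2 k'1 by (simp add: field_simps)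
      then show ?thesis by simp
    qed
    ultimately have "x\<^sup>2 / 16 * (real N * real k' / 4) \<le> x\<^sup>2 / (4 * (1 + x) ^ (3 * k' + 2)) * ((real N * real k' - real k') / 2)"
      using N2 x0 by (intro mult_mono) auto
    moreover have "\<gamma> * real k' = x\<^sup>2 / 16 * (real N * real k' / 4)" unfolding \<gamma>_def by simp
    ultimately show ?thesis by linarith
  qed
  have "real (card {A. A \<subseteq> odds_upto n \<and> indep (adjE E) A \<and> card A = m - card E}) * x ^ (m - card E)
     \<le> real (card {A. A \<subseteq> odds_upto n \<and> indep (adjE E') A \<and> card A = m - card E}) * x ^ (m - card E)"
    using indep_count_mono[OF E'(1), of n "m - card E"] x0 by (intro mult_right_mono) auto
  also have "\<dots> \<le> (1 + x) ^ N * exp (- (x\<^sup>2 / (4 * (1 + x) ^ (3 * k' + 2))) * ((real N * real k' - real k') / 2))"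
    using indep_count_bound[OF n E'ev x0 cond, of "m - card E"] N E'(2) by simp
  also have "\<dots> \<le> (1 + x) ^ N * exp (- \<gamma> * real k')"
    using pen x0 by (intro mult_left_mono) auto
  also have "\<dots> \<le> real (N + 1) * real (N choose m) * x ^ m * exp (- \<gamma> * real k')"
  proof -
    have "(1 + x) ^ N \<le> real (N + 1) * real (N choose m) * x ^ m"
      unfolding x_def by (rule mode_lemma) (use m1 mN in auto)
    then show ?thesis by (intro mult_right_mono) auto
  qed
  finally have h0: "real (card {A. A \<subseteq> odds_upto n \<and> indep (adjE E) A \<and> card A = m - card E}) * x ^ (m - card E)
     \<le> real (N + 1) * real (N choose m) * x ^ m * exp (- \<gamma> * real k')" .
  have h: "real (card {A. A \<subseteq> odds_upto n \<and> indep (adjE E) A \<and> card A = m - card E}) * x ^ (m - card E)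
     \<le> (real (N + 1) * real (N choose m) * exp (- \<gamma> * real k')) * x ^ m"
    using h0 by (simp only: mult_ac)
  have c: "real (card {A. A \<subseteq> odds_upto n \<and> indep (adjE E) A \<and> card A = m - card E})
     \<le> (real (N + 1) * real (N choose m) * exp (- \<gamma> * real k')) * x ^ card E"
    by (rule div_by_pow[OF x0 E(3) h])
  have ek: "exp (- \<gamma> * real k') \<le> exp (- \<gamma> * real (card E)) + exp (- \<gamma> * real L)"
  proof (cases "k \<le> L")
    case True then have "k' = card E" unfolding k'_def k_def by simp
    then show ?thesis by simp
  next
    case False then have "k' = L" unfolding k'_def by simp
    then show ?thesis by simp
  qed
  have "(real (N + 1) * real (N choose m) * exp (- \<gamma> * real k')) * x ^ card E
     \<le> (real (N + 1) * real (N choose m) * (exp (- \<gamma> * real (card E)) + exp (- \<gamma> * real L))) * x ^ card E"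
    using ek x0 by (intro mult_right_mono mult_left_mono) auto
  then show ?thesis using c by (simp only: mult_ac)
qed


lemma per_E_H:
  fixes n m :: nat and E :: "nat set"
  assumes n: "even n" and N: "N = n div 2" and mN: "19 * N \<le> 20 * m" and N3: "N \<ge> 3"
    and E: "E \<subseteq> evens_upto n" "E \<noteq> {}" "1000 * card E \<le> m"
  shows "card {A. A \<subseteq> odds_upto n \<and> indep (adjE E) A \<and> card A = m - card E} = 0"
proof -
  have "{A. A \<subseteq> odds_upto n \<and> indep (adjE E) A \<and> card A = m - card E} = {}"
  proof (rule ccontr)
    assume "{A. A \<subseteq> odds_upto n \<and> indep (adjE E) A \<and> card A = m - card E} \<noteq> {}"
    then obtain A where A: "A \<subseteq> odds_upto n" "indep (adjE E) A" "card A = m - card E" by blast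
    obtain e where e: "e \<in> E" using E by blast
    have E1: "{e} \<subseteq> evens_upto n" using e E by auto
    have iA: "indep (adjE {e}) A" using A(2) adjE_mono[of "{e}" E] e unfolding indep_def by blast
    have "Pd (adjE {e}) (odds_upto n) \<le> 2 * 3 * card (odds_upto n - A)"
    proof (rule indep_Pd_le[OF finite_odds A(1) iA adjE_sym])
      fix u show "card {w\<in>odds_upto n. adjE {e} u w} \<le> 3" using deg_upper[of "{e}" "odds_upto n" u] by simp
    qed
    moreover have "card (odds_upto n - A) = N - card A"
      using card_Diff_subset[OF finite_subset[OF A(1) finite_odds] A(1)] card_odds[OF n] N by simp
    moreover have "N * 1 \<le> 2 * Pd (adjE {e}) (odds_upto n) + 1"
      using Pd_lower[OF n E1] N by simp
    moreover have "card A \<le> N" using card_mono[OF finite_odds A(1)] card_odds[OF n] N by simp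
    ultimately have "N \<le> 12 * (N - card A) + 1" by linarith
    then show False using A(3) mN N3 E(3) by linarith
  qed
  then show ?thesis by (simp only: card.empty)
qed

lemma sumfree_card:
  assumes I: "I \<subseteq> {1..n}" and sf: "sum_free I"
  shows "2 * card I \<le> n + 1"
proof (cases "I = {}")
  case True then show ?thesis by simp
next
  case False
  have finI: "finite I" using I finite_subset by blast
  define M where "M = Max I"
  have MI: "M \<in> I" unfolding M_def using finI False by simp
  have Mn: "M \<le> n" using MI I by auto
  define S where "S = I - {M}"
  have Sl: "1 \<le> x \<and> x < M" if "x \<in> S" for x
  proof -
    have x: "x \<in> I" "x \<noteq> M" using that unfolding S_def by auto
    have "x \<le> M" unfolding M_def using finI x(1) by simp
    moreover have "1 \<le> x" using x(1) I by auto
    ultimately show ?thesis using x(2) by simp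
  qed
  have finS: "finite S" unfolding S_def using finI by simp
  have inj: "inj_on (\<lambda>x. M - x) S"
  proof (rule inj_onI)
    fix a b assume "a \<in> S" "b \<in> S" "M - a = M - b"
    then show "a = b" using Sl[of a] Sl[of b] by linarith
  qed
  have disj: "S \<inter> (\<lambda>x. M - x) ` S = {}"
  proof (rule ccontr)
    assume "S \<inter> (\<lambda>x. M - x) ` S \<noteq> {}"
    then obtain x y where xy: "y \<in> S" "x \<in> S" "y = M - x" by blast
    then have "x + y = M" using Sl[of x] by simp
    moreover have "x \<in> I" "y \<in> I" using xy unfolding S_def by auto
    ultimately show False using sf MI unfolding sum_free_def by blast
  qed
  have sub: "S \<union> (\<lambda>x. M - x) ` S \<subseteq> {1..<M}"
  proof
    fix z assume "z \<in> S \<union> (\<lambda>x. M - x) ` S"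
    then show "z \<in> {1..<M}"
    proof
      assume "z \<in> S" then show ?thesis using Sl by auto
    next
      assume "z \<in> (\<lambda>x. M - x) ` S"
      then obtain x where "x \<in> S" "z = M - x" by auto
      then show ?thesis using Sl[of x] by auto
    qed
  qed
  have "card S + card S = card (S \<union> (\<lambda>x. M - x) ` S)"
    using card_Un_disjoint[OF finS finite_imageI[OF finS] disj] card_image[OF inj] by simp
  also have "\<dots> \<le> card {1..<M}" by (rule card_mono) (use sub in auto)
  also have "\<dots> = M - 1" by simp
  finally have "2 * card S \<le> M - 1" by simp
  moreover have "card I = card S + 1" unfolding S_def using card_Suc_Diff1[OF finI MI] by simp
  moreover have "1 \<le> M" using MI I by auto
  ultimately show ?thesis using Mn by linarith
qed

lemma final_bound:
  fixes N m :: nat and B T \<alpha> :: real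
  assumes m1: "1 \<le> m" and mN: "m \<le> N" and B: "B \<ge> 0" and a: "\<alpha> \<ge> 0"
    and T: "T \<le> 2 * exp (\<alpha> * real N / real m)"
  shows "B + B * T \<le> 2 powr ((\<alpha> + 1) * real (2 * N) / real m) * B"
proof -
  define y where "y = \<alpha> * real N / real m"
  have y0: "y \<ge> 0" unfolding y_def using a by simp
  have e1: "exp y \<ge> 1" using y0 by simp
  have l2: "1 \<le> 2 * ln (2::real)"
  proof -
    have "exp 1 \<le> (4::real)" using exp_le by simp
    then have "1 \<le> ln (4::real)" by (subst ln_ge_iff) auto
    also have "ln (4::real) = 2 * ln 2"
      using ln_realpow[of 2 2] by simp
    finally show ?thesis .
  qed
  have ey: "exp y \<le> 2 powr (2 * y)"
  proof -
    have "y * 1 \<le> y * (2 * ln 2)" using l2 y0 by (rule mult_left_mono)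
    then have "y \<le> 2 * y * ln 2" by (simp add: algebra_simps)
    then have "exp y \<le> exp (2 * y * ln 2)" by simp
    also have "\<dots> = 2 powr (2 * y)" by (simp add: powr_def)
    finally show ?thesis .
  qed
  have "1 + T \<le> 4 * exp y" using T e1 unfolding y_def by linarith
  also have "\<dots> \<le> 2 powr 2 * 2 powr (2 * y)" using ey by simp
  also have "\<dots> = 2 powr (2 + 2 * y)" by (simp add: powr_add)
  also have "\<dots> \<le> 2 powr ((\<alpha> + 1) * real (2 * N) / real m)"
  proof (rule powr_mono)
    have "2 \<le> 2 * real N / real m" using m1 mN by (simp add: field_simps)
    moreover have "(\<alpha> + 1) * real (2 * N) / real m = 2 * (\<alpha> * real N / real m) + 2 * real N / real m"
      by (simp add: add_divide_distrib[symmetric] algebra_simps)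
    ultimately show "2 + 2 * y \<le> (\<alpha> + 1) * real (2 * N) / real m" unfolding y_def by linarith
  qed simp
  finally have "1 + T \<le> 2 powr ((\<alpha> + 1) * real (2 * N) / real m)" .
  then have "B * (1 + T) \<le> B * 2 powr ((\<alpha> + 1) * real (2 * N) / real m)" using B by (rule mult_left_mono)
  then show ?thesis by (simp add: algebra_simps)
qed

lemma K_le:
  assumes "0 \<le> \<delta> * real m"
  shows "real (nat \<lfloor>\<delta> * real m\<rfloor>) \<le> \<delta> * real m"
  using assms by (simp add: of_nat_floor)

theorem proposition4p1:
  shows "\<exists>\<delta>\<^sub>0::real. \<delta>\<^sub>0 > 0 \<and> (\<exists>C::real. C > 0 \<and>
    (\<forall>\<delta>::real. \<forall>m n :: nat. 0 < \<delta> \<and> \<delta> \<le> \<delta>\<^sub>0 \<and> even n \<longrightarrow>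
      real (card {I. I \<subseteq> {1..n} \<and> sum_free I \<and> card I = m \<and>
                     real (card (I - odds_upto n)) \<le> \<delta> * real m})
        \<le> 2 powr (C * real n / real m) * real ((n div 2) choose m)))"
proof -
  define \<delta>0 :: real where "\<delta>0 = 1 / 2^100"
  define C :: real where "C = 2^46 + 1"
  have main: "real (card {I. I \<subseteq> {1..n} \<and> sum_free I \<and> card I = m \<and>
                     real (card (I - odds_upto n)) \<le> \<delta> * real m})
        \<le> 2 powr (C * real n / real m) * real ((n div 2) choose m)"
    if d: "0 < \<delta>" "\<delta> \<le> \<delta>0" and n: "even n" for \<delta> m n
  proof -
    define N where "N = n div 2"
    define F where "F = {I. I \<subseteq> {1..n} \<and> sum_free I \<and> card I = m \<and> real (card (I - odds_upto n)) \<le> \<delta> * real m}"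
    have nN: "real n = real (2 * N)" unfolding N_def using n by simp
    have d1: "\<delta> \<le> 1" using d unfolding \<delta>0_def by simp
    have sd: "sqrt \<delta> \<le> 1 / 2^50"
    proof -
      have "sqrt \<delta> \<le> sqrt ((1 / 2^50)\<^sup>2)" using d unfolding \<delta>0_def by (simp add: power2_eq_square)
      also have "\<dots> = 1 / 2^50" by simp
      finally show ?thesis .
    qed
    have finF: "finite F" unfolding F_def by (rule finite_subset[of _ "Pow {1..n}"]) auto
    have cardle: "card I \<le> N" if "I \<in> F" for I
    proof -
      have "2 * card I \<le> n + 1" using that unfolding F_def by (intro sumfree_card) auto
      then show ?thesis unfolding N_def using n by auto
    qed
    have Cg: "C \<ge> 2^46" unfolding C_def by simp
    consider (zero) "m = 0" | (big) "N < m" | (small) "1 \<le> m" "m \<le> N" "real m \<le> C"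
      | (large) "1 \<le> m" "m \<le> N" "real m > C" by linarith
    then have "real (card F) \<le> 2 powr (C * real n / real m) * real (N choose m)"
    proof cases
      case zero
      have "F \<subseteq> {{}}"
      proof
        fix I assume "I \<in> F"
        then have "I \<subseteq> {1..n}" "card I = 0" unfolding F_def using zero by auto
        then show "I \<in> {{}}" using finite_subset[of I "{1..n}"] by auto
      qed
      then have "card F \<le> 1" using card_mono[of "{{}}" F] by simp
      then show ?thesis using zero by simp
    next
      case big
      have "F = {}"
      proof (rule ccontr)
        assume "F \<noteq> {}"
        then obtain I where I: "I \<in> F" by blast
        then have "card I = m" unfolding F_def by simp
        then show False using cardle[OF I] big by simp
      qed
      then show ?thesis by simp
    next
      case small
      have "card F \<le> card (Pow {1..n})" unfolding F_def by (rule card_mono) auto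
      also have "\<dots> = 2 ^ n" by (simp add: card_Pow)
      finally have c1: "real (card F) \<le> 2 powr (real n)" by (simp add: powr_realpow)
      have "real n \<le> C * real n / real m"
      proof -
        have "real n * real m \<le> real n * C" using small by (intro mult_left_mono) auto
        then show ?thesis using small by (simp add: field_simps)
      qed
      then have c2: "2 powr (real n) \<le> 2 powr (C * real n / real m)" by (intro powr_mono) auto
      have c3: "real (N choose m) \<ge> 1" using small by (simp add: Suc_le_eq)
      have "real (card F) \<le> 2 powr (C * real n / real m) * 1" using c1 c2 by linarith
      also have "\<dots> \<le> 2 powr (C * real n / real m) * real (N choose m)" using c3 by (intro mult_left_mono) auto
      finally show ?thesis .
    next
      case large
      have "real m \<ge> 3" using large Cg by simp
      then have m3: "m \<ge> 3" by simp
      have N3: "N \<ge> 3" using m3 large by simp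
      define K where "K = nat \<lfloor>\<delta> * real m\<rfloor>"
      have Kd: "real K \<le> \<delta> * real m" unfolding K_def using d by (intro K_le) simp
      have cE: "1000 * card E \<le> m \<and> card E \<le> m" if "real (card E) \<le> \<delta> * real m" for E :: "nat set"
      proof -
        have "\<delta> * real m \<le> 1 / 2^100 * real m" using d unfolding \<delta>0_def by (intro mult_right_mono) auto
        then have "1000 * real (card E) \<le> 1000 / 2^100 * real m" using that by simp
        also have "\<dots> \<le> real m" by simp
        finally have "real (1000 * card E) \<le> real m" by simp
        then show ?thesis by linarith
      qed
      have Bn: "real (N choose m) \<ge> 0" by simp
      have Cn: "C * real n / real m = (2^46 + 1) * real (2 * N) / real m" unfolding C_def nN ..
      have FD: "real (card F) \<le> real (N choose m) + (\<Sum>k\<in>{1..K}. real (N choose k) * g k)"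
        if g0: "\<And>k. g k \<ge> 0"
          and gb: "\<And>E. E \<subseteq> evens_upto n \<Longrightarrow> E \<noteq> {} \<Longrightarrow> real (card E) \<le> \<delta> * real m \<Longrightarrow>
             real (card {A. A \<subseteq> odds_upto n \<and> indep (adjE E) A \<and> card A = m - card E}) \<le> g (card E)"
        for g :: "nat \<Rightarrow> real"
        using family_decomp[OF n g0 gb] unfolding F_def N_def K_def by blast
      consider (H) "19 * N \<le> 20 * m" | (D) "20 * m < 19 * N" "N < 100 * m" | (S) "100 * m \<le> N" by linarith
      then show ?thesis
      proof cases
        case H
        have "real (card F) \<le> real (N choose m) + (\<Sum>k\<in>{1..K}. real (N choose k) * 0)"
        proof (rule FD)
          fix E assume E: "E \<subseteq> evens_upto n" "E \<noteq> {}" "real (card E) \<le> \<delta> * real m"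
          show "real (card {A. A \<subseteq> odds_upto n \<and> indep (adjE E) A \<and> card A = m - card E}) \<le> 0"
            using per_E_H[OF n N_def H N3 E(1,2)] cE[OF E(3)] by simp
        qed simp
        then have "real (card F) \<le> real (N choose m) + real (N choose m) * 0" by simp
        also have "\<dots> \<le> 2 powr ((2^46 + 1) * real (2 * N) / real m) * real (N choose m)"
          by (rule final_bound) (use large in auto)
        finally show ?thesis unfolding Cn .
      next
        case D
        define x where "x = real m / real (N - m)"
        have Nm: "real (N - m) > 0" "20 * real (N - m) > real N" using D by auto
        have x0: "x \<ge> 0" unfolding x_def by simp
        have xhi: "x \<le> 20"
        proof -
          have "x \<le> real N / real (N - m)" unfolding x_def using large Nm by (intro divide_right_mono) auto
          also have "\<dots> \<le> 20" using Nm by (simp add: field_simps)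
          finally show ?thesis .
        qed
        define g where "g k = real (N + 1) * real (N choose m) * x ^ k * exp (- (real N / 2^40))" for k
        have "real (card F) \<le> real (N choose m) + (\<Sum>k\<in>{1..K}. real (N choose k) * g k)"
        proof (rule FD)
          fix E assume E: "E \<subseteq> evens_upto n" "E \<noteq> {}" "real (card E) \<le> \<delta> * real m"
          show "real (card {A. A \<subseteq> odds_upto n \<and> indep (adjE E) A \<and> card A = m - card E}) \<le> g (card E)"
            unfolding g_def x_def using per_E_D[OF n N_def _ D(2) D(1) E(1,2)] cE[OF E(3)] large by simp
        qed (use x0 in \<open>simp add: g_def\<close>)
        also have "(\<Sum>k\<in>{1..K}. real (N choose k) * g k)
           = real (N choose m) * (real (N + 1) * (\<Sum>k\<in>{1..K}. real (N choose k) * x ^ k * exp (- (real N / 2^40))))"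
          unfolding g_def by (simp add: sum_distrib_left mult_ac)
        finally have c1: "real (card F) \<le> real (N choose m) + real (N choose m) *
            (real (N + 1) * (\<Sum>k\<in>{1..K}. real (N choose k) * x ^ k * exp (- (real N / 2^40))))" .
        have T: "real (N + 1) * (\<Sum>k\<in>{1..K}. real (N choose k) * x ^ k * exp (- (real N / 2^40)))
           \<le> 2 * exp (2^46 * real N / real m)"
        proof -
          have "real (N + 1) * (\<Sum>k\<in>{1..K}. real (N choose k) * x ^ k * exp (- (real N / 2^40)))
            \<le> exp (9 * 2^42 * real N / real m)"
            by (rule regime_D_sum) (use large x0 xhi d d1 sd Kd in auto)
          also have "\<dots> \<le> exp (2^46 * real N / real m)" using large by (simp add: divide_right_mono)
          finally show ?thesis using exp_gt_zero[of "2^46 * real N / real m"] by linarith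
        qed
        have "real (card F) \<le> 2 powr ((2^46 + 1) * real (2 * N) / real m) * real (N choose m)"
          using c1 final_bound[OF large(1) large(2) Bn _ T] by simp
        then show ?thesis unfolding Cn .
      next
        case S
        define x where "x = real m / real (N - m)"
        define \<gamma> where "\<gamma> = x\<^sup>2 * real N / 64"
        define L where "L = nat \<lfloor>1 / (3 * x)\<rfloor>"
        have Nm: "real (N - m) \<ge> 99 * real m" using S by auto
        have x0: "x > 0" unfolding x_def using Nm large by simp
        have xhi: "x \<le> 1/99" unfolding x_def using Nm large by (simp add: field_simps)
        have L6: "real L \<ge> 1 / (6 * x)"
        proof -
          have fl0: "\<lfloor>1 / (3 * x)\<rfloor> \<ge> 0" using x0 by simp
          have "real L = real_of_int \<lfloor>1 / (3 * x)\<rfloor>" unfolding L_def using fl0 by simp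
          moreover have "1 / (3 * x) - 1 < real_of_int \<lfloor>1 / (3 * x)\<rfloor>" by (rule real_of_int_floor_gt_diff_one)
          ultimately have "1 / (3 * x) - 1 \<le> real L" by linarith
          moreover have "1 / (6 * x) \<le> 1 / (3 * x) - 1"
          proof -
            have "1 \<le> 1 / (6 * x)" using x0 xhi by (simp add: field_simps)
            moreover have "1 / (3 * x) = 2 * (1 / (6 * x))" by simp
            ultimately show ?thesis by linarith
          qed
          ultimately show ?thesis by linarith
        qed
        define g where "g k = real (N + 1) * real (N choose m) * x ^ k * (exp (- \<gamma> * real k) + exp (- \<gamma> * real L))" for k
        have "real (card F) \<le> real (N choose m) + (\<Sum>k\<in>{1..K}. real (N choose k) * g k)"
        proof (rule FD)
          fix E assume E: "E \<subseteq> evens_upto n" "E \<noteq> {}" "real (card E) \<le> \<delta> * real m"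
          show "real (card {A. A \<subseteq> odds_upto n \<and> indep (adjE E) A \<and> card A = m - card E}) \<le> g (card E)"
            unfolding g_def \<gamma>_def L_def x_def using per_E_S[OF n N_def large(1) S E(1,2)] cE[OF E(3)] by simp
        qed (use x0 in \<open>simp add: g_def\<close>)
        also have "(\<Sum>k\<in>{1..K}. real (N choose k) * g k)
           = real (N choose m) * (real (N + 1) * (\<Sum>k\<in>{1..K}. real (N choose k) * x ^ k * exp (- \<gamma> * real k))
              + real (N + 1) * (\<Sum>k\<in>{1..K}. real (N choose k) * x ^ k * exp (- \<gamma> * real L)))"
          unfolding g_def by (simp add: sum_distrib_left sum.distrib algebra_simps)
        finally have c1: "real (card F) \<le> real (N choose m) + real (N choose m) *
            (real (N + 1) * (\<Sum>k\<in>{1..K}. real (N choose k) * x ^ k * exp (- \<gamma> * real k))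
              + real (N + 1) * (\<Sum>k\<in>{1..K}. real (N choose k) * x ^ k * exp (- \<gamma> * real L)))" .
        have TA: "real (N + 1) * (\<Sum>k\<in>{1..K}. real (N choose k) * x ^ k * exp (- \<gamma> * real k))
            \<le> exp (284 * real N / real m)"
          by (rule regime_S_A) (use large S in \<open>auto simp: x_def \<gamma>_def\<close>)
        have TB: "real (N + 1) * (\<Sum>k\<in>{1..K}. real (N choose k) * x ^ k * exp (- \<gamma> * real L))
            \<le> exp (6912 * real N / real m)"
        proof (rule regime_S_B[OF large(1) S x_def \<gamma>_def L6 d(1) d1 _ Kd])
          show "sqrt \<delta> \<le> 1 / 3072" using sd by simp
        qed
        have T: "real (N + 1) * (\<Sum>k\<in>{1..K}. real (N choose k) * x ^ k * exp (- \<gamma> * real k))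
              + real (N + 1) * (\<Sum>k\<in>{1..K}. real (N choose k) * x ^ k * exp (- \<gamma> * real L))
           \<le> 2 * exp (2^46 * real N / real m)"
        proof -
          have "exp (284 * real N / real m) \<le> exp (2^46 * real N / real m)" using large by (simp add: divide_right_mono)
          moreover have "exp (6912 * real N / real m) \<le> exp (2^46 * real N / real m)" using large by (simp add: divide_right_mono)
          ultimately show ?thesis using TA TB by linarith
        qed
        have "real (card F) \<le> 2 powr ((2^46 + 1) * real (2 * N) / real m) * real (N choose m)"
          using c1 final_bound[OF large(1) large(2) Bn _ T] by simp
        then show ?thesis unfolding Cn .
      qed
    qed
    then show ?thesis unfolding F_def N_def .
  qed
  show ?thesis
    apply (rule exI[of _ \<delta>0])
    apply (intro conjI)
     apply (simp add: \<delta>0_def)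
    apply (rule exI[of _ C])
    apply (intro conjI)
     apply (simp add: C_def)
    using main by blast
qed

end
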